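(* Consider the BSSC$(\alpha,\beta)$ with $\alpha+\beta\ne1$, used with feedback, with the transmission cost $\gamma(a_i,b_{i-1})=1$ if $a_i=b_{i-1}$ and $0$ otherwise, and average cost constraint $\frac1{n+1}\mathbf E[\sum_{i=0}^n\gamma(A_i,B_{i-1})]\le\kappa$. Let $\nu,\lambda$ be as defined below and $\kappa_{max}=\nu$. (a) For $\kappa\in[0,\kappa_{max}]$, every $n$ and every initial state $b_{-1}$, the constrained finite-time feedback capacity $C^{FB,BSSC}_{A^n\to B^n}(\kappa)$ is attained by the time-invariant input $\pi_i(a_i|a^{i-1},b^{i-1})=\pi^{TI}(a_i|b_{i-1})$, $i=0,\dots,n$, where $\pi^{TI}(a|b)=\kappa$ if $a=b$ and $1-\kappa$ if $a\ne b$; the corresponding output transition is time-invariant with $\mathbf P^{TI}(b'|b)=\bar\lambda$ if $b'=b$ and $1-\bar\lambda$ otherwise, where $\bar\lambda=\alpha\kappa+(1-\kappa)(1-\beta)$; and $$C^{FB,BSSC}_{A^n\to B^n}(\kappa)=(n+1)\max_{\pi(\cdot|b_{-1}):\ \mathbf E[\gamma(A_0,b_{-1})]\le\kappa}I(A_0;B_0|B_{-1}=b_{-1})\quad\forall b_{-1}\in\{0,1\}.$$ (b) The per unit time feedback capacity with cost is $$C^{FB,BSSC}_{A^\infty\to B^\infty}(\kappa)=\begin{cases}H(\bar\lambda)-\kappa H(\alpha)-(1-\kappa)H(\beta),&\kappa\le\kappa_{max},\\ H(\lambda)-\kappa_{max}H(\alpha)-(1-\kappa_{max})H(\beta),&\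kappa>\kappa_{max}.\end{cases}$$
   Context: BSSC$(\alpha,\beta)$: $\mathbb A=\mathbb B=\{0,1\}$, $\mathbf P(b_i=a_i|a_i,b_{i-1})=\alpha$ if $a_i=b_{i-1}$ and $=\beta$ if $a_i\ne b_{i-1}$, time-invariant. $H$ is the binary entropy (base 2). $\mu=\frac{H(\beta)-H(\alpha)}{1-\alpha-\beta}$, $\lambda=\frac1{1+2^\mu}$, $\nu=\frac{1-(1-\beta)(1+2^\mu)}{(\alpha+\beta-1)(1+2^\mu)}$. With fixed initial state $b_{-1}$ known to encoder and decoder, $C^{FB,BSSC}_{A^n\to B^n}(\kappa)=\sup\sum_{i=0}^nI(A^i;B_i|B^{i-1})$ over feedback input distributions $\{\mathbf P(a_i|a^{i-1},b^{i-1})\}_{i=0}^n$ satisfying the average cost constraint, and $C^{FB,BSSC}_{A^\infty\to B^\infty}(\kappa)=\lim_{n\to\infty}\frac1{n+1}C^{FB,BSSC}_{A^n\to B^n}(\kappa)$. *)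

theory Defs
  imports "HOL-Analysis.Analysis"
begin

definition binH :: "real \<Rightarrow> real" where
  "binH p = (if p = 0 \<or> p = 1 then 0 else - p * log 2 p - (1 - p) * log 2 (1 - p))"

definition prob :: "('s \<Rightarrow> real) \<Rightarrow> 's set \<Rightarrow> ('s \<Rightarrow> bool) \<Rightarrow> real" where
  "prob p S E = (\<Sum>s\<in>{s\<in>S. E s}. p s)"

definition cmi :: "('s \<Rightarrow> real) \<Rightarrow> 's set \<Rightarrow> ('s \<Rightarrow> 'x) \<Rightarrow> ('s \<Rightarrow> 'y) \<Rightarrow> ('s \<Rightarrow> 'z) \<Rightarrow> real" where
  "cmi p S X Y Z =
     (\<Sum>x\<in>X ` S. \<Sum>y\<in>Y ` S. \<Sum>z\<in>Z ` S.
        let pxyz = prob p S (\<lambda>s. X s = x \<and> Y s = y \<and> Z s = z);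
            pz = prob p S (\<lambda>s. Z s = z);
            pxz = prob p S (\<lambda>s. X s = x \<and> Z s = z);
            pyz = prob p S (\<lambda>s. Y s = y \<and> Z s = z)
        in if pxyz = 0 then 0 else pxyz * log 2 (pxyz * pz / (pxz * pyz)))"

text \<open>Q a bprev b = P(b_i = b | a_i = a, b_{i-1} = bprev).\<close>
definition Qch :: "real \<Rightarrow> real \<Rightarrow> bool \<Rightarrow> bool \<Rightarrow> bool \<Rightarrow> real" where
  "Qch \<alpha> \<beta> a bprev b =
     (if a = bprev then (if b = a then \<alpha> else 1 - \<alpha>)
      else (if b = a then \<beta> else 1 - \<beta>))"

definition gamma :: "bool \<Rightarrow> bool \<Rightarrow> real" where
  "gamma a bprev = (if a = bprev then 1 else 0)"

definition mu :: "real \<Rightarrow> real \<Rightarrow> real" where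
  "mu \<alpha> \<beta> = (binH \<beta> - binH \<alpha>) / (1 - \<alpha> - \<beta>)"

definition lam :: "real \<Rightarrow> real \<Rightarrow> real" where
  "lam \<alpha> \<beta> = 1 / (1 + 2 powr mu \<alpha> \<beta>)"

definition nu :: "real \<Rightarrow> real \<Rightarrow> real" where
  "nu \<alpha> \<beta> = (1 - (1 - \<beta>) * (1 + 2 powr mu \<alpha> \<beta>)) / ((\<alpha> + \<beta> - 1) * (1 + 2 powr mu \<alpha> \<beta>))"

definition lambar :: "real \<Rightarrow> real \<Rightarrow> real \<Rightarrow> real" where
  "lambar \<alpha> \<beta> \<kappa> = \<alpha> * \<kappa> + (1 - \<kappa>) * (1 - \<beta>)"

text \<open>Sample space: input and output sequences a^n, b^n as lists of length n+1
  (list index i = time i). The initial state b_{-1} is a fixed parameter b0.\<close>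
definition seqs :: "nat \<Rightarrow> (bool list \<times> bool list) set" where
  "seqs n = {(as, bs). length as = Suc n \<and> length bs = Suc n}"

definition prevb :: "bool \<Rightarrow> bool list \<Rightarrow> nat \<Rightarrow> bool" where
  "prevb b0 bs i = (if i = 0 then b0 else bs ! (i - 1))"

text \<open>A feedback input distribution: pi i a^{i-1} b^{i-1} a = P(a_i = a | a^{i-1}, b^{i-1}).\<close>
type_synonym policy = "nat \<Rightarrow> bool list \<Rightarrow> bool list \<Rightarrow> bool \<Rightarrow> real"

definition valid_policy :: "policy \<Rightarrow> bool" where
  "valid_policy \<pi> \<longleftrightarrow>
     (\<forall>i as bs a. 0 \<le> \<pi> i as bs a) \<and> (\<forall>i as bs. \<pi> i as bs True + \<pi> i as bs False = 1)"

definition joint :: "real \<Rightarrow> real \<Rightarrow> bool \<Rightarrow> policy \<Rightarrow> nat \<Rightarrow> bool list \<times> bool list \<Rightarrow> real" where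
  "joint \<alpha> \<beta> b0 \<pi> n s =
     (\<Prod>i\<le>n. \<pi> i (take i (fst s)) (take i (snd s)) (fst s ! i)
              * Qch \<alpha> \<beta> (fst s ! i) (prevb b0 (snd s) i) (snd s ! i))"

text \<open>Directed information sum_{i=0}^n I(A^i; B_i | B^{i-1}) (with B_{-1} = b0 fixed).\<close>
definition DI :: "real \<Rightarrow> real \<Rightarrow> bool \<Rightarrow> policy \<Rightarrow> nat \<Rightarrow> real" where
  "DI \<alpha> \<beta> b0 \<pi> n =
     (\<Sum>i\<le>n. cmi (joint \<alpha> \<beta> b0 \<pi> n) (seqs n)
                 (\<lambda>s. take (Suc i) (fst s)) (\<lambda>s. snd s ! i) (\<lambda>s. take i (snd s)))"

definition avg_cost :: "real \<Rightarrow> real \<Rightarrow> bool \<Rightarrow> policy \<Rightarrow> nat \<Rightarrow> real" where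
  "avg_cost \<alpha> \<beta> b0 \<pi> n =
     (1 / real (Suc n)) *
       (\<Sum>i\<le>n. \<Sum>s\<in>seqs n. joint \<alpha> \<beta> b0 \<pi> n s * gamma (fst s ! i) (prevb b0 (snd s) i))"

definition Cfb :: "real \<Rightarrow> real \<Rightarrow> nat \<Rightarrow> real \<Rightarrow> bool \<Rightarrow> real" where
  "Cfb \<alpha> \<beta> n \<kappa> b0 =
     Sup {DI \<alpha> \<beta> b0 \<pi> n | \<pi>. valid_policy \<pi> \<and> avg_cost \<alpha> \<beta> b0 \<pi> n \<le> \<kappa>}"

definition piTI :: "real \<Rightarrow> bool \<Rightarrow> policy" where
  "piTI \<kappa> b0 i as bs a = (if a = prevb b0 bs i then \<kappa> else 1 - \<kappa>)"

definition PTI :: "real \<Rightarrow> real \<Rightarrow> real \<Rightarrow> bool \<Rightarrow> bool \<Rightarrow> real" where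
  "PTI \<alpha> \<beta> \<kappa> b b' = (if b' = b then lambar \<alpha> \<beta> \<kappa> else 1 - lambar \<alpha> \<beta> \<kappa>)"

text \<open>A distribution p(a) = pi(a | b_{-1}) on A_0.\<close>
definition valid_dist :: "(bool \<Rightarrow> real) \<Rightarrow> bool" where
  "valid_dist p \<longleftrightarrow> (\<forall>a. 0 \<le> p a) \<and> p True + p False = 1"

definition mi1 :: "real \<Rightarrow> real \<Rightarrow> bool \<Rightarrow> (bool \<Rightarrow> real) \<Rightarrow> real" where
  "mi1 \<alpha> \<beta> b0 p = cmi (\<lambda>s. p (fst s) * Qch \<alpha> \<beta> (fst s) b0 (snd s)) UNIV fst snd (\<lambda>_. ())"

definition cost1 :: "bool \<Rightarrow> (bool \<Rightarrow> real) \<Rightarrow> real" where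
  "cost1 b0 p = (\<Sum>a\<in>UNIV. p a * gamma a b0)"

end

theory Submission
  imports Defs
begin
lemma binH_eq: "binH p = - p * log 2 p - (1 - p) * log 2 (1 - p)"
  by (auto simp: binH_def)

lemma ln_le_m1: "0 < (x::real) \<Longrightarrow> ln x \<le> x - 1"
  using ln_le_minus_one by auto

lemma gibbs:
  fixes p q :: real
  assumes "0 \<le> p" "p \<le> 1" "0 < q" "q < 1"
  shows "binH p \<le> - p * log 2 q - (1 - p) * log 2 (1 - q)"
proof -
  have l2: "ln 2 > (0::real)" by simp
  consider "p = 0" | "p = 1" | "0 < p \<and> p < 1" using assms by linarith
  then show ?thesis
  proof cases
    case 1
    have "log 2 (1 - q) \<le> 0" using assms by (simp add: log_le_zero_cancel_iff)
    then show ?thesis using 1 by (simp add: binH_def)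
  next
    case 2
    have "log 2 q \<le> 0" using assms by (simp add: log_le_zero_cancel_iff)
    then show ?thesis using 2 by (simp add: binH_def)
  next
    case 3
    have a: "ln (q / p) \<le> q / p - 1" using 3 assms by (intro ln_le_m1) auto
    have b: "ln ((1-q) / (1-p)) \<le> (1-q) / (1-p) - 1" using 3 assms by (intro ln_le_m1) auto
    have "p * ln (q/p) + (1-p) * ln ((1-q)/(1-p)) \<le> p * (q/p - 1) + (1-p) * ((1-q)/(1-p) - 1)"
      using a b 3 by (intro add_mono mult_left_mono) auto
    also have "\<dots> = 0" using 3 by (simp add: field_simps)
    finally have c: "p * ln (q/p) + (1-p) * ln ((1-q)/(1-p)) \<le> 0" .
    have d: "p * ln (q/p) + (1-p) * ln ((1-q)/(1-p)) =
       p * ln q - p * ln p + (1-p) * ln (1-q) - (1-p) * ln (1-p)"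
      using 3 assms by (simp add: ln_div algebra_simps)
    have "(- p * ln p - (1 - p) * ln (1 - p)) \<le> - p * ln q - (1 - p) * ln (1 - q)"
      using c d by linarith
    hence "(- p * ln p - (1 - p) * ln (1 - p)) / ln 2 \<le> (- p * ln q - (1 - p) * ln (1 - q)) / ln 2"
      by (intro divide_right_mono) auto
    then show ?thesis by (simp add: binH_eq log_def diff_divide_distrib)
  qed
qed


lemma t_pos: "0 < 1 + 2 powr mu a b" using powr_gt_zero[of 2 "mu a b"] by linarith

lemma lam_pos: "0 < lam a b" "lam a b < 1"
  unfolding lam_def using t_pos[of a b] powr_gt_zero[of 2 "mu a b"] by (auto simp: divide_simps)

lemma nu_eq: assumes "a + b \<noteq> 1"
  shows "nu a b = (lam a b - (1 - b)) / (a + b - 1)"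
proof -
  have t: "1 + 2 powr mu a b \<noteq> 0" using t_pos[of a b] by linarith
  have c: "a + b - 1 \<noteq> 0" using assms by simp
  show ?thesis unfolding nu_def lam_def using t c by (simp add: field_simps)
qed

lemma lambar_eq: "lambar a b k = (1 - b) + (a + b - 1) * k"
  unfolding lambar_def by (simp add: algebra_simps)

lemma lambar_nu: assumes "a + b \<noteq> 1" shows "lambar a b (nu a b) = lam a b"
  using assms by (simp add: lambar_eq nu_eq)

lemma lam_ge: assumes "0 < q" "q < 1" "mu a b \<le> log 2 ((1 - q) / q)"
  shows "q \<le> lam a b"
proof -
  have "2 powr mu a b \<le> (1 - q) / q" using assms by (subst (asm) le_log_iff) auto
  hence "1 + 2 powr mu a b \<le> 1 / q" using assms by (simp add: field_simps)
  hence "q * (1 + 2 powr mu a b) \<le> 1" using assms by (simp add: field_simps)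
  thus ?thesis unfolding lam_def using t_pos[of a b] by (simp add: field_simps)
qed

lemma lam_le: assumes "0 < q" "q < 1" "log 2 ((1 - q) / q) \<le> mu a b"
  shows "lam a b \<le> q"
proof -
  have "(1 - q) / q \<le> 2 powr mu a b" using assms by (subst (asm) log_le_iff) auto
  hence "1 / q \<le> 1 + 2 powr mu a b" using assms by (simp add: field_simps)
  hence "1 \<le> q * (1 + 2 powr mu a b)" using assms by (simp add: field_simps)
  thus ?thesis unfolding lam_def using t_pos[of a b] by (simp add: field_simps)
qed

lemma gibbs2:
  assumes "0 \<le> p" "p \<le> 1" "0 < q" "q < 1"
  shows "binH p - binH q \<le> (p - q) * log 2 ((1 - q) / q)"
proof -
  have "binH p \<le> - p * log 2 q - (1 - p) * log 2 (1 - q)" by (rule gibbs[OF assms])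
  moreover have "(p - q) * log 2 ((1 - q) / q) = (p - q) * log 2 (1-q) - (p - q) * log 2 q" using assms by (simp add: log_divide algebra_simps)
  moreover have "binH q = - q * log 2 q - (1 - q) * log 2 (1 - q)" by (rule binH_eq)
  ultimately show ?thesis by (simp add: algebra_simps)
qed

lemma binH_sym: "binH (1 - p) = binH p" by (auto simp: binH_def algebra_simps)

lemma mu_alt: assumes "a + b \<noteq> 1" shows "mu a b = (binH a - binH (1 - b)) / (a + b - 1)"
proof -
  have "1 - a - b = - (a + b - 1)" by simp
  thus ?thesis unfolding mu_def binH_sym using assms
    by (simp add: divide_simps) (auto simp: algebra_simps)
qed

lemma lam_between:
  assumes "0 \<le> a" "a \<le> 1" "0 \<le> b" "b \<le> 1" "a + b \<noteq> 1"
  shows "(a + b - 1 > 0 \<longrightarrow> 1 - b \<le> lam a b \<and> lam a b \<le> a)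
       \<and> (a + b - 1 < 0 \<longrightarrow> a \<le> lam a b \<and> lam a b \<le> 1 - b)"
proof -
  define c where "c = a + b - 1"
  have mu: "mu a b = (binH a - binH (1 - b)) / c" using mu_alt[OF assms(5)] c_def by simp
  have G1: "binH a - binH (1-b) \<le> (a + b - 1) * log 2 ((1 - (1-b)) / (1-b))" if "0 < b" "b < 1"
  proof -
    have "binH a - binH (1-b) \<le> (a - (1-b)) * log 2 ((1 - (1-b)) / (1-b))"
      using that assms by (intro gibbs2) auto
    moreover have "a - (1-b) = a + b - 1" by simp
    ultimately show ?thesis by metis
  qed
  have G2: "binH (1-b) - binH a \<le> ((1-b) - a) * log 2 ((1 - a) / a)" if "0 < a" "a < 1"
    using that assms by (intro gibbs2) auto
  have l1: "lam a b \<le> 1" using lam_pos[of a b] by simp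
  have l0: "0 \<le> lam a b" using lam_pos[of a b] by simp
  have P: "c > 0 \<longrightarrow> 1 - b \<le> lam a b \<and> lam a b \<le> a"
  proof
    assume c: "c > 0"
    have A: "1 - b \<le> lam a b"
    proof (cases "b = 1")
      case True thus ?thesis using l0 by simp
    next
      case False
      hence b: "0 < b" "b < 1" using assms c c_def by auto
      have "mu a b \<le> log 2 ((1 - (1-b)) / (1-b))"
        using G1[OF b] c unfolding mu c_def by (simp add: divide_simps mult.commute)
      thus ?thesis using b by (intro lam_ge) auto
    qed
    have B: "lam a b \<le> a"
    proof (cases "a = 1")
      case True thus ?thesis using l1 by simp
    next
      case False
      hence aa: "0 < a" "a < 1" using assms c c_def by auto
      have "log 2 ((1 - a) / a) \<le> mu a b"
        using G2[OF aa] c unfolding mu c_def by (simp add: divide_simps algebra_simps)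
      thus ?thesis using aa by (intro lam_le) auto
    qed
    show "1 - b \<le> lam a b \<and> lam a b \<le> a" using A B by simp
  qed
  have N: "c < 0 \<longrightarrow> a \<le> lam a b \<and> lam a b \<le> 1 - b"
  proof
    assume c: "c < 0"
    have A: "a \<le> lam a b"
    proof (cases "a = 0")
      case True thus ?thesis using l0 by simp
    next
      case False
      hence aa: "0 < a" "a < 1" using assms c c_def by auto
      have "mu a b \<le> log 2 ((1 - a) / a)"
        using G2[OF aa] c unfolding mu c_def by (simp add: divide_simps algebra_simps)
      thus ?thesis using aa by (intro lam_ge) auto
    qed
    have B: "lam a b \<le> 1 - b"
    proof (cases "b = 0")
      case True thus ?thesis using l1 by simp
    next
      case False
      hence b: "0 < b" "b < 1" using assms c c_def by auto
      have "log 2 ((1 - (1-b)) / (1-b)) \<le> mu a b"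
        using G1[OF b] c unfolding mu c_def by (simp add: divide_simps algebra_simps)
      thus ?thesis using b by (intro lam_le) auto
    qed
    show "a \<le> lam a b \<and> lam a b \<le> 1 - b" using A B by simp
  qed
  show ?thesis using P N c_def by simp
qed



definition Phi :: "real \<Rightarrow> real \<Rightarrow> real \<Rightarrow> real" where
  "Phi a b k = binH (lambar a b k) - k * binH a - (1 - k) * binH b"

definition A1 :: "real \<Rightarrow> real \<Rightarrow> real \<Rightarrow> real" where
  "A1 a b q = - binH a - a * log 2 q - (1 - a) * log 2 (1 - q)"
definition A2 :: "real \<Rightarrow> real \<Rightarrow> real \<Rightarrow> real" where
  "A2 a b q = - binH b - (1 - b) * log 2 q - b * log 2 (1 - q)"

lemma tangent: "A2 a b (lambar a b k) + (A1 a b (lambar a b k) - A2 a b (lambar a b k)) * k = Phi a b k"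
proof -
  define q where "q = lambar a b k"
  have e1: "(1-b)*(1-k) + a*k = q" unfolding q_def lambar_def by (simp add: algebra_simps)
  have e2: "b*(1-k) + (1-a)*k = 1 - q" unfolding q_def lambar_def by (simp add: algebra_simps)
  have "A2 a b q + (A1 a b q - A2 a b q) * k =
     - k * binH a - (1-k) * binH b - ((1-b)*(1-k) + a*k) * log 2 q - (b*(1-k) + (1-a)*k) * log 2 (1-q)"
    unfolding A1_def A2_def by (simp add: algebra_simps)
  also have "\<dots> = Phi a b k" unfolding e1 e2 Phi_def q_def[symmetric] binH_eq[of q] by simp
  finally show ?thesis unfolding q_def .
qed

context
  fixes a b :: real
  assumes ab: "0 \<le> a" "a \<le> 1" "0 \<le> b" "b \<le> 1" "a + b \<noteq> 1"
begin

lemma nu_range: "0 \<le> nu a b \<and> nu a b \<le> 1"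
proof -
  have L: "(a + b - 1 > 0 \<longrightarrow> 1 - b \<le> lam a b \<and> lam a b \<le> a)
       \<and> (a + b - 1 < 0 \<longrightarrow> a \<le> lam a b \<and> lam a b \<le> 1 - b)" by (rule lam_between[OF ab])
  have "a + b - 1 > 0 \<or> a + b - 1 < 0" using ab by linarith
  then show ?thesis
  proof
    assume c: "a + b - 1 > 0"
    then show ?thesis using L unfolding nu_eq[OF ab(5)] by (auto simp: divide_simps)
  next
    assume c: "a + b - 1 < 0"
    then show ?thesis using L unfolding nu_eq[OF ab(5)] by (auto simp: divide_simps)
  qed
qed

lemma q_range: assumes "0 < k" "k \<le> nu a b" shows "0 < lambar a b k \<and> lambar a b k < 1"
proof -
  have L: "(a + b - 1 > 0 \<longrightarrow> 1 - b \<le> lam a b \<and> lam a b \<le> a)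
       \<and> (a + b - 1 < 0 \<longrightarrow> a \<le> lam a b \<and> lam a b \<le> 1 - b)" by (rule lam_between[OF ab])
  have ln: "lambar a b (nu a b) = lam a b" by (rule lambar_nu[OF ab(5)])
  have lp: "0 < lam a b" "lam a b < 1" by (rule lam_pos)+
  have "a + b - 1 > 0 \<or> a + b - 1 < 0" using ab by linarith
  then show ?thesis
  proof
    assume c: "a + b - 1 > 0"
    have "(a + b - 1) * k \<le> (a + b - 1) * nu a b" using c assms by simp
    moreover have "0 < (a + b - 1) * k" using c assms by simp
    ultimately show ?thesis using ln lp ab unfolding lambar_eq by auto
  next
    assume c: "a + b - 1 < 0"
    have "(a + b - 1) * nu a b \<le> (a + b - 1) * k" using c assms by (simp add: mult_left_mono_neg)
    moreover have "(a + b - 1) * k < 0" using c assms by (simp add: mult_neg_pos)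
    ultimately show ?thesis using ln lp ab unfolding lambar_eq by auto
  qed
qed

lemma log_lam: "log 2 ((1 - lam a b) / lam a b) = mu a b"
proof -
  have "(1 - lam a b) / lam a b = 2 powr mu a b"
    unfolding lam_def using t_pos[of a b] by (simp add: field_simps)
  thus ?thesis by simp
qed

lemma slope_diff: assumes "0 < q" "q < 1"
  shows "A1 a b q - A2 a b q = (a + b - 1) * (log 2 ((1 - q) / q) - mu a b)"
proof -
  have m: "binH b - binH a = - (a + b - 1) * mu a b"
    using ab(5) unfolding mu_def by (simp add: divide_simps)
  have l: "log 2 ((1 - q) / q) = log 2 (1 - q) - log 2 q" using assms by (simp add: log_divide)
  show ?thesis using m unfolding A1_def A2_def l by (simp add: algebra_simps)
qed

lemma slope_nonneg: assumes "0 \<le> k" "k \<le> nu a b" "0 < lambar a b k" "lambar a b k < 1"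
  shows "0 \<le> A1 a b (lambar a b k) - A2 a b (lambar a b k)"
proof -
  define q where "q = lambar a b k"
  have q: "0 < q" "q < 1" using assms q_def by auto
  have lp: "0 < lam a b" "lam a b < 1" by (rule lam_pos)+
  have ln: "lambar a b (nu a b) = lam a b" by (rule lambar_nu[OF ab(5)])
  have mono: "log 2 ((1 - x) / x) \<le> log 2 ((1 - y) / y)" if "0 < y" "y \<le> x" "x < 1" for x y
  proof -
    have "(1 - x) / x \<le> (1 - y) / y" using that by (simp add: divide_simps) (simp add: algebra_simps mult_left_mono)
    thus ?thesis using that by (simp add: log_le_cancel_iff)
  qed
  have "a + b - 1 > 0 \<or> a + b - 1 < 0" using ab by linarith
  then show ?thesis
  proof
    assume c: "a + b - 1 > 0"
    have "(a + b - 1) * k \<le> (a + b - 1) * nu a b" using c assms by simp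
    hence "q \<le> lam a b" using ln unfolding q_def lambar_eq by simp
    hence "mu a b \<le> log 2 ((1 - q) / q)" using mono[of q "lam a b"] q lp log_lam by simp
    thus ?thesis using c slope_diff[OF q] q_def by simp
  next
    assume c: "a + b - 1 < 0"
    have "(a + b - 1) * nu a b \<le> (a + b - 1) * k" using c assms by (simp add: mult_left_mono_neg)
    hence "lam a b \<le> q" using ln unfolding q_def lambar_eq by simp
    hence "log 2 ((1 - q) / q) \<le> mu a b" using mono[of "lam a b" q] q lp log_lam by simp
    thus ?thesis using c slope_diff[OF q] q_def by (simp add: mult_nonpos_nonpos)
  qed
qed

lemma slope_zero: "A1 a b (lam a b) - A2 a b (lam a b) = 0"
  using slope_diff[OF lam_pos] log_lam by simp

lemma Phi_nu: "Phi a b (nu a b) = binH (lam a b) - nu a b * binH a - (1 - nu a b) * binH b"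
  unfolding Phi_def lambar_nu[OF ab(5)] ..

end


lemma prob_nonneg: "(\<forall>s\<in>S. 0 \<le> p s) \<Longrightarrow> 0 \<le> prob p S E"
  unfolding prob_def by (intro sum_nonneg) auto

lemma prob_ge: "finite S \<Longrightarrow> (\<forall>s\<in>S. 0 \<le> p s) \<Longrightarrow> s \<in> S \<Longrightarrow> E s \<Longrightarrow> p s \<le> prob p S E"
  unfolding prob_def by (rule member_le_sum) auto

lemma cmi_as_sum:
  assumes fin: "finite S" and nn: "\<forall>s\<in>S. 0 \<le> p s"
  shows "cmi p S X Y Z = (\<Sum>s\<in>S. p s * log 2 (prob p S (\<lambda>t. X t = X s \<and> Y t = Y s \<and> Z t = Z s)
            * prob p S (\<lambda>t. Z t = Z s) / (prob p S (\<lambda>t. X t = X s \<and> Z t = Z s)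
            * prob p S (\<lambda>t. Y t = Y s \<and> Z t = Z s))))"
proof -
  define P where "P x y z = prob p S (\<lambda>s. X s = x \<and> Y s = y \<and> Z s = z)" for x y z
  define L where "L x y z = log 2 (P x y z * prob p S (\<lambda>s. Z s = z) /
      (prob p S (\<lambda>s. X s = x \<and> Z s = z) * prob p S (\<lambda>s. Y s = y \<and> Z s = z)))" for x y z
  define g where "g x y z = (if P x y z = 0 then 0 else P x y z * L x y z)" for x y z
  have c: "cmi p S X Y Z = (\<Sum>x\<in>X`S. \<Sum>y\<in>Y`S. \<Sum>z\<in>Z`S. g x y z)"
    unfolding cmi_def g_def P_def L_def Let_def by simp
  also have "\<dots> = (\<Sum>x\<in>X`S. \<Sum>(y,z)\<in>Y`S \<times> Z`S. g x y z)"
    by (simp add: sum.cartesian_product)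
  also have "\<dots> = (\<Sum>t\<in>X`S \<times> (Y`S \<times> Z`S). g (fst t) (fst (snd t)) (snd (snd t)))"
    by (simp add: sum.cartesian_product case_prod_beta)
  also have "\<dots> = (\<Sum>t\<in>(\<lambda>s. (X s, Y s, Z s)) ` S. g (fst t) (fst (snd t)) (snd (snd t)))"
  proof (rule sum.mono_neutral_right)
    show "finite (X ` S \<times> Y ` S \<times> Z ` S)" using fin by simp
    show "(\<lambda>s. (X s, Y s, Z s)) ` S \<subseteq> X ` S \<times> Y ` S \<times> Z ` S" by auto
    show "\<forall>i\<in>X ` S \<times> Y ` S \<times> Z ` S - (\<lambda>s. (X s, Y s, Z s)) ` S.
        g (fst i) (fst (snd i)) (snd (snd i)) = 0"
    proof
      fix i assume i: "i \<in> X ` S \<times> Y ` S \<times> Z ` S - (\<lambda>s. (X s, Y s, Z s)) ` S"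
      obtain x y z where ii: "i = (x, y, z)" by (cases i) auto
      have "{s\<in>S. X s = x \<and> Y s = y \<and> Z s = z} = {}"
      proof (rule ccontr)
        assume "{s\<in>S. X s = x \<and> Y s = y \<and> Z s = z} \<noteq> {}"
        then obtain s where "s \<in> S" "X s = x" "Y s = y" "Z s = z" by blast
        hence "i \<in> (\<lambda>s. (X s, Y s, Z s)) ` S" using ii by force
        thus False using i by blast
      qed
      hence "P x y z = 0" unfolding P_def prob_def by (simp only: sum.empty)
      thus "g (fst i) (fst (snd i)) (snd (snd i)) = 0" using ii g_def by simp
    qed
  qed
  also have "\<dots> = (\<Sum>t\<in>(\<lambda>s. (X s, Y s, Z s)) ` S. \<Sum>s\<in>{s\<in>S. (X s, Y s, Z s) = t}. p s * L (fst t) (fst (snd t)) (snd (snd t)))"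
  proof (rule sum.cong[OF refl])
    fix t assume "t \<in> (\<lambda>s. (X s, Y s, Z s)) ` S"
    obtain x y z where ii: "t = (x, y, z)" by (cases t) auto
    have e: "{s\<in>S. (X s, Y s, Z s) = t} = {s\<in>S. X s = x \<and> Y s = y \<and> Z s = z}" using ii by auto
    have "(\<Sum>s\<in>{s\<in>S. (X s, Y s, Z s) = t}. p s * L x y z) = P x y z * L x y z"
      unfolding e P_def prob_def by (simp add: sum_distrib_right)
    thus "g (fst t) (fst (snd t)) (snd (snd t)) = (\<Sum>s\<in>{s\<in>S. (X s, Y s, Z s) = t}. p s * L (fst t) (fst (snd t)) (snd (snd t)))"
      using ii g_def by simp
  qed
  also have "\<dots> = (\<Sum>s\<in>S. p s * L (X s) (Y s) (Z s))"
    by (subst sum.image_gen[OF fin, of _ "\<lambda>s. (X s, Y s, Z s)"]) (rule sum.cong[OF refl], rule sum.cong, auto)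
  finally show ?thesis unfolding L_def P_def by simp
qed



lemma sum_fib_Z:
  assumes "finite S"
  shows "(\<Sum>z\<in>Z`S. prob p S (\<lambda>s. Z s = z)) = sum p S"
  unfolding prob_def by (subst sum.image_gen[OF assms, of p Z]) simp

lemma sum_pv_le:
  assumes fin: "finite S" and nn: "\<forall>s\<in>S. 0 \<le> p s" and tot: "sum p S = 1"
    and rnn: "\<forall>z y. 0 \<le> r z y" and rs: "\<forall>z. (\<Sum>y\<in>Y`S. r z y) \<le> 1"
  shows "(\<Sum>s\<in>S. p s * (r (Z s) (Y s) * prob p S (\<lambda>t. Z t = Z s) / prob p S (\<lambda>t. Y t = Y s \<and> Z t = Z s))) \<le> 1"
proof -
  define Pz where "Pz z = prob p S (\<lambda>t. Z t = z)" for z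
  define Pyz where "Pyz yz = prob p S (\<lambda>t. Y t = fst yz \<and> Z t = snd yz)" for yz
  define f where "f yz = r (snd yz) (fst yz) * Pz (snd yz) / Pyz yz" for yz
  have Pznn: "0 \<le> Pz z" for z unfolding Pz_def using nn by (rule prob_nonneg)
  have "(\<Sum>s\<in>S. p s * (r (Z s) (Y s) * prob p S (\<lambda>t. Z t = Z s) / prob p S (\<lambda>t. Y t = Y s \<and> Z t = Z s)))
      = (\<Sum>s\<in>S. p s * f (Y s, Z s))" unfolding f_def Pz_def Pyz_def by simp
  also have "\<dots> = (\<Sum>t\<in>(\<lambda>s. (Y s, Z s)) ` S. \<Sum>s\<in>{s\<in>S. (Y s, Z s) = t}. p s * f t)"
    by (subst sum.image_gen[OF fin, of _ "\<lambda>s. (Y s, Z s)"]) (rule sum.cong[OF refl], rule sum.cong, auto)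
  also have "\<dots> = (\<Sum>t\<in>(\<lambda>s. (Y s, Z s)) ` S. Pyz t * f t)"
  proof (rule sum.cong[OF refl])
    fix t
    have e: "{s\<in>S. (Y s, Z s) = t} = {s\<in>S. Y s = fst t \<and> Z s = snd t}" by auto
    show "(\<Sum>s\<in>{s\<in>S. (Y s, Z s) = t}. p s * f t) = Pyz t * f t"
      unfolding e Pyz_def prob_def by (simp add: sum_distrib_right)
  qed
  also have "\<dots> \<le> (\<Sum>t\<in>(\<lambda>s. (Y s, Z s)) ` S. r (snd t) (fst t) * Pz (snd t))"
  proof (rule sum_mono)
    fix t
    show "Pyz t * f t \<le> r (snd t) (fst t) * Pz (snd t)"
    proof (cases "Pyz t = 0")
      case True thus ?thesis using rnn Pznn by simp
    next
      case False thus ?thesis unfolding f_def by simp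
    qed
  qed
  also have "\<dots> \<le> (\<Sum>t\<in>Y`S \<times> Z`S. r (snd t) (fst t) * Pz (snd t))"
    by (rule sum_mono2) (use fin rnn Pznn in auto)
  also have "\<dots> = (\<Sum>y\<in>Y`S. \<Sum>z\<in>Z`S. r z y * Pz z)"
    by (subst sum.cartesian_product) (simp add: case_prod_beta)
  also have "\<dots> = (\<Sum>z\<in>Z`S. Pz z * (\<Sum>y\<in>Y`S. r z y))"
    by (subst sum.swap) (simp add: sum_distrib_left mult.commute)
  also have "\<dots> \<le> (\<Sum>z\<in>Z`S. Pz z)"
    by (rule sum_mono) (use Pznn rs in \<open>auto intro: mult_left_le\<close>)
  also have "\<dots> = 1" unfolding Pz_def using sum_fib_Z[OF fin, where Z=Z and p=p] tot by simp
  finally show ?thesis .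
qed

lemma cmi_bound:
  assumes fin: "finite S" and nn: "\<forall>s\<in>S. 0 \<le> p s" and tot: "sum p S = 1"
    and W: "\<forall>s\<in>S. prob p S (\<lambda>t. X t = X s \<and> Y t = Y s \<and> Z t = Z s)
                 = prob p S (\<lambda>t. X t = X s \<and> Z t = Z s) * W s"
    and rnn: "\<forall>z y. 0 \<le> r z y" and rs: "\<forall>z. (\<Sum>y\<in>Y`S. r z y) \<le> 1"
    and rpos: "\<forall>s\<in>S. 0 < p s \<longrightarrow> 0 < W s \<longrightarrow> 0 < r (Z s) (Y s)"
  shows "cmi p S X Y Z \<le> (\<Sum>s\<in>S. p s * log 2 (W s / r (Z s) (Y s)))"
proof -
  define Pxyz where "Pxyz s = prob p S (\<lambda>t. X t = X s \<and> Y t = Y s \<and> Z t = Z s)" for s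
  define Pxz where "Pxz s = prob p S (\<lambda>t. X t = X s \<and> Z t = Z s)" for s
  define Pyz where "Pyz s = prob p S (\<lambda>t. Y t = Y s \<and> Z t = Z s)" for s
  define Pz where "Pz s = prob p S (\<lambda>t. Z t = Z s)" for s
  define v where "v s = r (Z s) (Y s) * Pz s / Pyz s" for s
  have l2: "0 < ln (2::real)" by simp
  have pt: "p s * log 2 (Pxyz s * Pz s / (Pxz s * Pyz s))
     \<le> p s * log 2 (W s / r (Z s) (Y s)) + p s * (v s - 1) / ln 2" if s: "s \<in> S" for s
  proof (cases "p s = 0")
    case True thus ?thesis by simp
  next
    case False
    hence ps: "0 < p s" using nn s by force
    have "p s \<le> Pxyz s" unfolding Pxyz_def by (rule prob_ge[OF fin nn s]) simp
    hence a: "0 < Pxyz s" using ps by linarith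
    have "p s \<le> Pyz s" unfolding Pyz_def by (rule prob_ge[OF fin nn s]) simp
    hence b: "0 < Pyz s" using ps by linarith
    have "p s \<le> Pz s" unfolding Pz_def by (rule prob_ge[OF fin nn s]) simp
    hence c: "0 < Pz s" using ps by linarith
    have d: "0 \<le> Pxz s" unfolding Pxz_def using nn by (rule prob_nonneg)
    have e: "Pxyz s = Pxz s * W s" using W s unfolding Pxyz_def Pxz_def by blast
    have f: "0 < Pxz s" "0 < W s" using a d e by (auto simp: zero_less_mult_iff)
    have g: "0 < r (Z s) (Y s)" using rpos s ps f by blast
    have vp: "0 < v s" unfolding v_def using g c b by simp
    have "Pxyz s * Pz s / (Pxz s * Pyz s) = (W s / r (Z s) (Y s)) * v s"
      unfolding e v_def using f g b by (simp add: field_simps)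
    hence "log 2 (Pxyz s * Pz s / (Pxz s * Pyz s)) = log 2 ((W s / r (Z s) (Y s)) * v s)"
      by (rule arg_cong)
    also have "\<dots> = log 2 (W s / r (Z s) (Y s)) + log 2 (v s)"
      using f g vp by (intro log_mult_pos) auto
    finally have "log 2 (Pxyz s * Pz s / (Pxz s * Pyz s)) = log 2 (W s / r (Z s) (Y s)) + log 2 (v s)" .
    moreover have "log 2 (v s) \<le> (v s - 1) / ln 2"
      unfolding log_def using ln_le_m1[OF vp] l2 by (simp add: divide_right_mono)
    ultimately have "log 2 (Pxyz s * Pz s / (Pxz s * Pyz s)) \<le> log 2 (W s / r (Z s) (Y s)) + (v s - 1) / ln 2"
      by linarith
    hence "p s * log 2 (Pxyz s * Pz s / (Pxz s * Pyz s)) \<le> p s * (log 2 (W s / r (Z s) (Y s)) + (v s - 1) / ln 2)"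
      using ps by (intro mult_left_mono) auto
    thus ?thesis by (simp add: distrib_left)
  qed
  have "cmi p S X Y Z = (\<Sum>s\<in>S. p s * log 2 (Pxyz s * Pz s / (Pxz s * Pyz s)))"
    unfolding cmi_as_sum[OF fin nn] Pxyz_def Pz_def Pxz_def Pyz_def ..
  also have "\<dots> \<le> (\<Sum>s\<in>S. p s * log 2 (W s / r (Z s) (Y s)) + p s * (v s - 1) / ln 2)"
    by (rule sum_mono) (rule pt)
  also have "\<dots> = (\<Sum>s\<in>S. p s * log 2 (W s / r (Z s) (Y s))) + ((\<Sum>s\<in>S. p s * v s) - sum p S) / ln 2"
    by (simp add: sum.distrib sum_divide_distrib[symmetric] sum_subtractf right_diff_distrib)
  also have "\<dots> \<le> (\<Sum>s\<in>S. p s * log 2 (W s / r (Z s) (Y s)))"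
  proof -
    have "(\<Sum>s\<in>S. p s * v s) \<le> 1" unfolding v_def Pz_def Pyz_def
      by (rule sum_pv_le[OF fin nn tot rnn rs])
    thus ?thesis using tot l2 by (simp add: divide_nonpos_pos)
  qed
  finally show ?thesis .
qed

lemma cmi_eq:
  assumes fin: "finite S" and nn: "\<forall>s\<in>S. 0 \<le> p s"
    and W: "\<forall>s\<in>S. prob p S (\<lambda>t. X t = X s \<and> Y t = Y s \<and> Z t = Z s)
                 = prob p S (\<lambda>t. X t = X s \<and> Z t = Z s) * W s"
    and R: "\<forall>s\<in>S. prob p S (\<lambda>t. Y t = Y s \<and> Z t = Z s)
                 = prob p S (\<lambda>t. Z t = Z s) * r (Z s) (Y s)"
  shows "cmi p S X Y Z = (\<Sum>s\<in>S. p s * log 2 (W s / r (Z s) (Y s)))"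
proof -
  define Pxyz where "Pxyz s = prob p S (\<lambda>t. X t = X s \<and> Y t = Y s \<and> Z t = Z s)" for s
  define Pxz where "Pxz s = prob p S (\<lambda>t. X t = X s \<and> Z t = Z s)" for s
  define Pyz where "Pyz s = prob p S (\<lambda>t. Y t = Y s \<and> Z t = Z s)" for s
  define Pz where "Pz s = prob p S (\<lambda>t. Z t = Z s)" for s
  have pt: "p s * log 2 (Pxyz s * Pz s / (Pxz s * Pyz s))
     = p s * log 2 (W s / r (Z s) (Y s))" if s: "s \<in> S" for s
  proof (cases "p s = 0")
    case True thus ?thesis by simp
  next
    case False
    hence ps: "0 < p s" using nn s by force
    have "p s \<le> Pxyz s" unfolding Pxyz_def by (rule prob_ge[OF fin nn s]) simp
    hence a: "0 < Pxyz s" using ps by linarith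
    have "p s \<le> Pyz s" unfolding Pyz_def by (rule prob_ge[OF fin nn s]) simp
    hence b: "0 < Pyz s" using ps by linarith
    have "p s \<le> Pz s" unfolding Pz_def by (rule prob_ge[OF fin nn s]) simp
    hence c: "0 < Pz s" using ps by linarith
    have d: "0 \<le> Pxz s" unfolding Pxz_def using nn by (rule prob_nonneg)
    have e: "Pxyz s = Pxz s * W s" using W s unfolding Pxyz_def Pxz_def by blast
    have f: "0 < Pxz s" "0 < W s" using a d e by (auto simp: zero_less_mult_iff)
    have e2: "Pyz s = Pz s * r (Z s) (Y s)" using R s unfolding Pyz_def Pz_def by blast
    have g: "r (Z s) (Y s) \<noteq> 0" using b e2 by auto
    have "Pxyz s * Pz s / (Pxz s * Pyz s) = W s / r (Z s) (Y s)"
      unfolding e e2 using f g c by (simp add: field_simps)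
    thus ?thesis by simp
  qed
  have "cmi p S X Y Z = (\<Sum>s\<in>S. p s * log 2 (Pxyz s * Pz s / (Pxz s * Pyz s)))"
    unfolding cmi_as_sum[OF fin nn] Pxyz_def Pz_def Pxz_def Pyz_def ..
  also have "\<dots> = (\<Sum>s\<in>S. p s * log 2 (W s / r (Z s) (Y s)))"
    by (rule sum.cong[OF refl]) (rule pt)
  finally show ?thesis .
qed



definition seqsL :: "nat \<Rightarrow> (bool list \<times> bool list) set" where
  "seqsL k = {(as, bs). length as = k \<and> length bs = k}"

definition fac :: "real \<Rightarrow> real \<Rightarrow> bool \<Rightarrow> policy \<Rightarrow> nat \<Rightarrow> bool list \<Rightarrow> bool list \<Rightarrow> real" where
  "fac a b b0 \<pi> j as bs = \<pi> j (take j as) (take j bs) (as ! j) * Qch a b (as ! j) (prevb b0 bs j) (bs ! j)"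

definition Jp :: "real \<Rightarrow> real \<Rightarrow> bool \<Rightarrow> policy \<Rightarrow> nat \<Rightarrow> bool list \<Rightarrow> bool list \<Rightarrow> real" where
  "Jp a b b0 \<pi> k as bs = (\<Prod>j<k. fac a b b0 \<pi> j as bs)"

lemma joint_Jp: "joint a b b0 \<pi> n s = Jp a b b0 \<pi> (Suc n) (fst s) (snd s)"
  unfolding joint_def Jp_def fac_def lessThan_Suc_atMost ..

lemma seqs_L: "seqs n = seqsL (Suc n)"
  unfolding seqs_def seqsL_def ..

lemma finite_seqsL: "finite (seqsL k)"
proof -
  have "seqsL k = {xs. set xs \<subseteq> UNIV \<and> length xs = k} \<times> {xs. set xs \<subseteq> UNIV \<and> length xs = k}"
    unfolding seqsL_def by auto
  thus ?thesis using finite_lists_length_eq[of "UNIV :: bool set" k] by simp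
qed

lemma seqsL_0: "seqsL 0 = {([], [])}" unfolding seqsL_def by auto

lemma seqsL_Suc: "seqsL (Suc k) = (\<lambda>(s, xy). (fst s @ [fst xy], snd s @ [snd xy])) ` (seqsL k \<times> UNIV)"
proof
  show "(\<lambda>(s, xy). (fst s @ [fst xy], snd s @ [snd xy])) ` (seqsL k \<times> UNIV) \<subseteq> seqsL (Suc k)"
    unfolding seqsL_def by auto
  show "seqsL (Suc k) \<subseteq> (\<lambda>(s, xy). (fst s @ [fst xy], snd s @ [snd xy])) ` (seqsL k \<times> UNIV)"
  proof
    fix t assume t: "t \<in> seqsL (Suc k)"
    obtain as bs where tt: "t = (as, bs)" "length as = Suc k" "length bs = Suc k"
      using t unfolding seqsL_def by auto
    have "as = butlast as @ [last as]" "bs = butlast bs @ [last bs]"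
      using tt by (metis append_butlast_last_id list.size(3) nat.distinct(1))+
    moreover have "(butlast as, butlast bs) \<in> seqsL k" using tt unfolding seqsL_def by auto
    ultimately show "t \<in> (\<lambda>(s, xy). (fst s @ [fst xy], snd s @ [snd xy])) ` (seqsL k \<times> UNIV)"
      using tt by (intro image_eqI[of _ _ "((butlast as, butlast bs), (last as, last bs))"]) auto
  qed
qed

lemma inj_app: "inj_on (\<lambda>(s, xy). (fst s @ [fst xy], snd s @ [snd xy])) A"
  by (auto simp: inj_on_def)

lemma prevb_app: "j \<le> length bs \<Longrightarrow> prevb b0 (bs @ [y]) j = prevb b0 bs j"
  unfolding prevb_def by (auto simp: nth_append)

lemma prevb_take: "j \<le> k \<Longrightarrow> prevb b0 (take k bs) j = prevb b0 bs j"
  unfolding prevb_def by auto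

lemma Jp_append:
  assumes "length as = k" "length bs = k"
  shows "Jp a b b0 \<pi> (Suc k) (as @ [x]) (bs @ [y]) = Jp a b b0 \<pi> k as bs * \<pi> k as bs x * Qch a b x (prevb b0 bs k) y"
proof -
  have "(\<Prod>j<k. fac a b b0 \<pi> j (as @ [x]) (bs @ [y])) = (\<Prod>j<k. fac a b b0 \<pi> j as bs)"
    by (rule prod.cong[OF refl]) (use assms in \<open>auto simp: fac_def nth_append prevb_app\<close>)
  moreover have "fac a b b0 \<pi> k (as @ [x]) (bs @ [y]) = \<pi> k as bs x * Qch a b x (prevb b0 bs k) y"
    using assms by (simp add: fac_def prevb_app nth_append)
  ultimately show ?thesis unfolding Jp_def by (simp add: mult.assoc)
qed

lemma step:
  "(\<Sum>s\<in>seqsL (Suc k). Jp a b b0 \<pi> (Suc k) (fst s) (snd s) * F s) =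
   (\<Sum>s\<in>seqsL k. Jp a b b0 \<pi> k (fst s) (snd s) *
      (\<Sum>x\<in>UNIV. \<Sum>y\<in>UNIV. \<pi> k (fst s) (snd s) x * Qch a b x (prevb b0 (snd s) k) y * F (fst s @ [x], snd s @ [y])))"
proof -
  have "(\<Sum>s\<in>seqsL (Suc k). Jp a b b0 \<pi> (Suc k) (fst s) (snd s) * F s) =
    (\<Sum>u\<in>seqsL k \<times> UNIV. Jp a b b0 \<pi> (Suc k) (fst (fst u) @ [fst (snd u)]) (snd (fst u) @ [snd (snd u)])
        * F (fst (fst u) @ [fst (snd u)], snd (fst u) @ [snd (snd u)]))"
    unfolding seqsL_Suc by (subst sum.reindex[OF inj_app]) (simp add: case_prod_beta)
  also have "\<dots> = (\<Sum>s\<in>seqsL k. \<Sum>xy\<in>UNIV. Jp a b b0 \<pi> (Suc k) (fst s @ [fst xy]) (snd s @ [snd xy])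
        * F (fst s @ [fst xy], snd s @ [snd xy]))"
    by (subst sum.cartesian_product) (simp add: case_prod_beta)
  also have "\<dots> = (\<Sum>s\<in>seqsL k. \<Sum>x\<in>UNIV. \<Sum>y\<in>UNIV. Jp a b b0 \<pi> (Suc k) (fst s @ [x]) (snd s @ [y])
        * F (fst s @ [x], snd s @ [y]))"
    by (rule sum.cong[OF refl]) (simp add: sum.cartesian_product case_prod_beta)
  also have "\<dots> = (\<Sum>s\<in>seqsL k. Jp a b b0 \<pi> k (fst s) (snd s) *
      (\<Sum>x\<in>UNIV. \<Sum>y\<in>UNIV. \<pi> k (fst s) (snd s) x * Qch a b x (prevb b0 (snd s) k) y * F (fst s @ [x], snd s @ [y])))"
  proof (rule sum.cong[OF refl])
    fix s assume s: "s \<in> seqsL k"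
    hence l: "length (fst s) = k" "length (snd s) = k" unfolding seqsL_def by auto
    show "(\<Sum>x\<in>UNIV. \<Sum>y\<in>UNIV. Jp a b b0 \<pi> (Suc k) (fst s @ [x]) (snd s @ [y]) * F (fst s @ [x], snd s @ [y])) =
      Jp a b b0 \<pi> k (fst s) (snd s) *
      (\<Sum>x\<in>UNIV. \<Sum>y\<in>UNIV. \<pi> k (fst s) (snd s) x * Qch a b x (prevb b0 (snd s) k) y * F (fst s @ [x], snd s @ [y]))"
      unfolding Jp_append[OF l] by (simp add: sum_distrib_left mult.assoc)
  qed
  finally show ?thesis .
qed

lemma Qsum: "(\<Sum>y\<in>UNIV. Qch a b x p y) = 1"
  unfolding UNIV_bool by (simp add: Qch_def)

lemma Qnn: "0 \<le> a \<Longrightarrow> a \<le> 1 \<Longrightarrow> 0 \<le> b \<Longrightarrow> b \<le> 1 \<Longrightarrow> 0 \<le> Qch a b x p y"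
  unfolding Qch_def by auto

lemma pisum: "valid_policy \<pi> \<Longrightarrow> (\<Sum>x\<in>UNIV. \<pi> k as bs x) = 1"
  unfolding valid_policy_def UNIV_bool by (simp add: add.commute)

lemma piQsum: "valid_policy \<pi> \<Longrightarrow> (\<Sum>x\<in>UNIV. \<Sum>y\<in>UNIV. \<pi> k as bs x * Qch a b x p y * c) = c"
proof -
  assume v: "valid_policy \<pi>"
  have "(\<Sum>x\<in>UNIV. \<Sum>y\<in>UNIV. \<pi> k as bs x * Qch a b x p y * c) = (\<Sum>x\<in>UNIV. \<pi> k as bs x * c * (\<Sum>y\<in>UNIV. Qch a b x p y))"
    by (simp add: sum_distrib_left mult_ac)
  also have "\<dots> = (\<Sum>x\<in>UNIV. \<pi> k as bs x) * c" by (simp add: Qsum sum_distrib_right)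
  finally show ?thesis using pisum[OF v] by simp
qed

lemma Jp_nonneg:
  assumes "valid_policy \<pi>" "0 \<le> a" "a \<le> 1" "0 \<le> b" "b \<le> 1"
  shows "0 \<le> Jp a b b0 \<pi> k as bs"
  unfolding Jp_def fac_def using assms
  by (intro prod_nonneg ballI mult_nonneg_nonneg Qnn) (auto simp: valid_policy_def)

lemma Jp_sum1:
  assumes v: "valid_policy \<pi>"
  shows "(\<Sum>s\<in>seqsL k. Jp a b b0 \<pi> k (fst s) (snd s)) = 1"
proof (induction k)
  case 0 thus ?case by (simp add: seqsL_0 Jp_def)
next
  case (Suc k)
  have "(\<Sum>s\<in>seqsL (Suc k). Jp a b b0 \<pi> (Suc k) (fst s) (snd s)) =
        (\<Sum>s\<in>seqsL (Suc k). Jp a b b0 \<pi> (Suc k) (fst s) (snd s) * (\<lambda>_. 1) s)" by simp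
  also have "\<dots> = (\<Sum>s\<in>seqsL k. Jp a b b0 \<pi> k (fst s) (snd s))"
    unfolding step using piQsum[OF v, where c=1] by simp
  finally show ?case using Suc by simp
qed

lemma marg:
  assumes v: "valid_policy \<pi>" and km: "k \<le> m"
  shows "(\<Sum>s\<in>seqsL m. Jp a b b0 \<pi> m (fst s) (snd s) * F (take k (fst s), take k (snd s))) =
         (\<Sum>s\<in>seqsL k. Jp a b b0 \<pi> k (fst s) (snd s) * F s)"
  using km
proof (induction m)
  case 0 thus ?case by (simp add: seqsL_0)
next
  case (Suc m)
  show ?case
  proof (cases "k = Suc m")
    case True
    show ?thesis unfolding True
      by (rule sum.cong[OF refl]) (auto simp: seqsL_def)
  next
    case False
    hence km: "k \<le> m" using Suc.prems by simp
    have "(\<Sum>s\<in>seqsL (Suc m). Jp a b b0 \<pi> (Suc m) (fst s) (snd s) * F (take k (fst s), take k (snd s)))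
        = (\<Sum>s\<in>seqsL m. Jp a b b0 \<pi> m (fst s) (snd s) * F (take k (fst s), take k (snd s)))"
      unfolding step
    proof (rule sum.cong[OF refl])
      fix s assume s: "s \<in> seqsL m"
      hence l: "length (fst s) = m" "length (snd s) = m" unfolding seqsL_def by auto
      have "(\<Sum>x\<in>UNIV. \<Sum>y\<in>UNIV. \<pi> m (fst s) (snd s) x * Qch a b x (prevb b0 (snd s) m) y *
               F (take k (fst (fst s @ [x], snd s @ [y])), take k (snd (fst s @ [x], snd s @ [y]))))
          = (\<Sum>x\<in>UNIV. \<Sum>y\<in>UNIV. \<pi> m (fst s) (snd s) x * Qch a b x (prevb b0 (snd s) m) y *
               F (take k (fst s), take k (snd s)))"
        using l km by simp
      also have "\<dots> = F (take k (fst s), take k (snd s))" by (rule piQsum[OF v])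
      finally show "Jp a b b0 \<pi> m (fst s) (snd s) *
          (\<Sum>x\<in>UNIV. \<Sum>y\<in>UNIV. \<pi> m (fst s) (snd s) x * Qch a b x (prevb b0 (snd s) m) y *
               F (take k (fst (fst s @ [x], snd s @ [y])), take k (snd (fst s @ [x], snd s @ [y])))) =
          Jp a b b0 \<pi> m (fst s) (snd s) * F (take k (fst s), take k (snd s))" by simp
    qed
    also have "\<dots> = (\<Sum>s\<in>seqsL k. Jp a b b0 \<pi> k (fst s) (snd s) * F s)" by (rule Suc.IH[OF km])
    finally show ?thesis .
  qed
qed



lemma prob_ind: "finite S \<Longrightarrow> prob p S E = (\<Sum>s\<in>S. p s * (if E s then 1 else 0))"
  unfolding prob_def by (simp add: sum.inter_filter if_distrib cong: if_cong)

lemma prob_cong: "(\<And>s. s \<in> S \<Longrightarrow> E s = E' s) \<Longrightarrow> prob p S E = prob p S E'"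
  unfolding prob_def by (rule arg_cong[where f="sum p"]) auto

lemma prob_split: "finite S \<Longrightarrow> prob p S E = prob p S (\<lambda>t. E t \<and> P t) + prob p S (\<lambda>t. E t \<and> \<not> P t)"
  unfolding prob_ind by (simp add: sum.distrib[symmetric] cong: if_cong) (rule sum.cong, auto)

definition Bq :: "real \<Rightarrow> real \<Rightarrow> bool \<Rightarrow> policy \<Rightarrow> nat \<Rightarrow> bool list \<Rightarrow> real" where
  "Bq a b b0 \<pi> k yb = (\<Sum>s\<in>seqsL k. Jp a b b0 \<pi> k (fst s) (snd s) * (if snd s = yb then 1 else 0))"

definition cst :: "real \<Rightarrow> real \<Rightarrow> bool \<Rightarrow> policy \<Rightarrow> nat \<Rightarrow> real" where
  "cst a b b0 \<pi> i = (\<Sum>s\<in>seqsL i. Jp a b b0 \<pi> i (fst s) (snd s) * \<pi> i (fst s) (snd s) (prevb b0 (snd s) i))"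

context
  fixes a b :: real and b0 :: bool and \<pi> :: policy and n :: nat
  assumes v: "valid_policy \<pi>"
begin

lemma exp_marg: assumes "k \<le> Suc n"
  shows "(\<Sum>s\<in>seqs n. joint a b b0 \<pi> n s * F (take k (fst s), take k (snd s))) =
         (\<Sum>s\<in>seqsL k. Jp a b b0 \<pi> k (fst s) (snd s) * F s)"
  unfolding seqs_L joint_Jp by (rule marg[OF v assms])

lemma P_pref: assumes "k \<le> Suc n" "length xa = k" "length yb = k"
  shows "prob (joint a b b0 \<pi> n) (seqs n) (\<lambda>t. take k (fst t) = xa \<and> take k (snd t) = yb) = Jp a b b0 \<pi> k xa yb"
proof -
  have "prob (joint a b b0 \<pi> n) (seqs n) (\<lambda>t. take k (fst t) = xa \<and> take k (snd t) = yb)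
     = (\<Sum>s\<in>seqs n. joint a b b0 \<pi> n s * (\<lambda>u. if u = (xa, yb) then 1 else 0) (take k (fst s), take k (snd s)))"
    unfolding prob_ind[OF finite_seqsL[of "Suc n", folded seqs_L]] by simp
  also have "\<dots> = (\<Sum>s\<in>seqsL k. Jp a b b0 \<pi> k (fst s) (snd s) * (if s = (xa, yb) then 1 else 0))"
    by (rule exp_marg[OF assms(1)])
  also have "\<dots> = (\<Sum>s\<in>seqsL k. if s = (xa, yb) then Jp a b b0 \<pi> k (fst s) (snd s) else 0)"
    by (rule sum.cong) auto
  also have "\<dots> = Jp a b b0 \<pi> k xa yb"
    using assms by (subst sum.delta[OF finite_seqsL]) (auto simp: seqsL_def)
  finally show ?thesis .
qed

lemma P_out: assumes "k \<le> Suc n"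
  shows "prob (joint a b b0 \<pi> n) (seqs n) (\<lambda>t. take k (snd t) = yb) = Bq a b b0 \<pi> k yb"
proof -
  have "prob (joint a b b0 \<pi> n) (seqs n) (\<lambda>t. take k (snd t) = yb)
     = (\<Sum>s\<in>seqs n. joint a b b0 \<pi> n s * (\<lambda>u. if snd u = yb then 1 else 0) (take k (fst s), take k (snd s)))"
    unfolding prob_ind[OF finite_seqsL[of "Suc n", folded seqs_L]] by simp
  also have "\<dots> = Bq a b b0 \<pi> k yb" unfolding Bq_def by (rule exp_marg[OF assms(1)])
  finally show ?thesis .
qed

lemma B_step: assumes "length zb = i"
  shows "Bq a b b0 \<pi> (Suc i) (zb @ [y]) = (\<Sum>s\<in>seqsL i. Jp a b b0 \<pi> i (fst s) (snd s) *
     (if snd s = zb then (\<Sum>x\<in>UNIV. \<pi> i (fst s) (snd s) x * Qch a b x (prevb b0 zb i) y) else 0))"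
  unfolding Bq_def step
proof (rule sum.cong[OF refl])
  fix s assume s: "s \<in> seqsL i"
  have "(\<Sum>x\<in>UNIV. \<Sum>y'\<in>UNIV. \<pi> i (fst s) (snd s) x * Qch a b x (prevb b0 (snd s) i) y' *
          (if snd (fst s @ [x], snd s @ [y']) = zb @ [y] then 1 else 0))
      = (\<Sum>x\<in>UNIV. \<Sum>y'\<in>UNIV. if y' = y then (if snd s = zb then \<pi> i (fst s) (snd s) x * Qch a b x (prevb b0 zb i) y' else 0) else 0)"
    by (intro sum.cong refl) auto
  also have "\<dots> = (if snd s = zb then (\<Sum>x\<in>UNIV. \<pi> i (fst s) (snd s) x * Qch a b x (prevb b0 zb i) y) else 0)"
    by (simp add: sum.delta')
  finally show "Jp a b b0 \<pi> i (fst s) (snd s) *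
      (\<Sum>x\<in>UNIV. \<Sum>y'\<in>UNIV. \<pi> i (fst s) (snd s) x * Qch a b x (prevb b0 (snd s) i) y' *
          (if snd (fst s @ [x], snd s @ [y']) = zb @ [y] then 1 else 0)) =
      Jp a b b0 \<pi> i (fst s) (snd s) *
      (if snd s = zb then (\<Sum>x\<in>UNIV. \<pi> i (fst s) (snd s) x * Qch a b x (prevb b0 zb i) y) else 0)" by simp
qed

lemma P1: assumes "i \<le> n" "length xa = Suc i" "length zb = i"
  shows "prob (joint a b b0 \<pi> n) (seqs n) (\<lambda>t. take (Suc i) (fst t) = xa \<and> snd t ! i = y \<and> take i (snd t) = zb)
    = Jp a b b0 \<pi> i (take i xa) zb * \<pi> i (take i xa) zb (xa ! i) * Qch a b (xa ! i) (prevb b0 zb i) y"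
proof -
  have "prob (joint a b b0 \<pi> n) (seqs n) (\<lambda>t. take (Suc i) (fst t) = xa \<and> snd t ! i = y \<and> take i (snd t) = zb)
      = prob (joint a b b0 \<pi> n) (seqs n) (\<lambda>t. take (Suc i) (fst t) = xa \<and> take (Suc i) (snd t) = zb @ [y])"
  proof (rule prob_cong)
    fix t assume "t \<in> seqs n"
    hence "i < length (snd t)" using assms unfolding seqs_def by auto
    hence "take (Suc i) (snd t) = take i (snd t) @ [snd t ! i]" by (rule take_Suc_conv_app_nth)
    thus "(take (Suc i) (fst t) = xa \<and> snd t ! i = y \<and> take i (snd t) = zb) =
          (take (Suc i) (fst t) = xa \<and> take (Suc i) (snd t) = zb @ [y])" by auto
  qed
  also have "\<dots> = Jp a b b0 \<pi> (Suc i) xa (zb @ [y])" using assms by (intro P_pref) auto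
  also have "\<dots> = Jp a b b0 \<pi> (Suc i) (take i xa @ [xa ! i]) (zb @ [y])"
    using assms by (metis lessI take_Suc_conv_app_nth take_all order_refl)
  also have "\<dots> = Jp a b b0 \<pi> i (take i xa) zb * \<pi> i (take i xa) zb (xa ! i) * Qch a b (xa ! i) (prevb b0 zb i) y"
    using assms by (intro Jp_append) auto
  finally show ?thesis .
qed

lemma P2: assumes "i \<le> n" "length xa = Suc i" "length zb = i"
  shows "prob (joint a b b0 \<pi> n) (seqs n) (\<lambda>t. take (Suc i) (fst t) = xa \<and> take i (snd t) = zb)
    = Jp a b b0 \<pi> i (take i xa) zb * \<pi> i (take i xa) zb (xa ! i)"
proof -
  have "prob (joint a b b0 \<pi> n) (seqs n) (\<lambda>t. take (Suc i) (fst t) = xa \<and> take i (snd t) = zb)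
     = prob (joint a b b0 \<pi> n) (seqs n) (\<lambda>t. take (Suc i) (fst t) = xa \<and> snd t ! i = True \<and> take i (snd t) = zb)
     + prob (joint a b b0 \<pi> n) (seqs n) (\<lambda>t. take (Suc i) (fst t) = xa \<and> snd t ! i = False \<and> take i (snd t) = zb)"
    by (subst prob_split[OF finite_seqsL[of "Suc n", folded seqs_L], where P="\<lambda>t. snd t ! i"])
       (intro arg_cong2[where f="(+)"] prob_cong; auto)
  also have "\<dots> = Jp a b b0 \<pi> i (take i xa) zb * \<pi> i (take i xa) zb (xa ! i) *
     (Qch a b (xa ! i) (prevb b0 zb i) True + Qch a b (xa ! i) (prevb b0 zb i) False)"
    unfolding P1[OF assms] by (simp add: algebra_simps)
  also have "\<dots> = Jp a b b0 \<pi> i (take i xa) zb * \<pi> i (take i xa) zb (xa ! i)"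
    using Qsum[of a b "xa ! i" "prevb b0 zb i"] unfolding UNIV_bool by (simp add: add.commute)
  finally show ?thesis .
qed

lemma W_cond: assumes "i \<le> n"
  shows "\<forall>s\<in>seqs n. prob (joint a b b0 \<pi> n) (seqs n) (\<lambda>t. take (Suc i) (fst t) = take (Suc i) (fst s) \<and> snd t ! i = snd s ! i \<and> take i (snd t) = take i (snd s))
     = prob (joint a b b0 \<pi> n) (seqs n) (\<lambda>t. take (Suc i) (fst t) = take (Suc i) (fst s) \<and> take i (snd t) = take i (snd s))
       * Qch a b (fst s ! i) (prevb b0 (snd s) i) (snd s ! i)"
proof
  fix s assume "s \<in> seqs n"
  hence l: "length (fst s) = Suc n" "length (snd s) = Suc n" unfolding seqs_def by auto
  have l2: "length (take (Suc i) (fst s)) = Suc i" "length (take i (snd s)) = i" using l assms by auto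
  show "prob (joint a b b0 \<pi> n) (seqs n) (\<lambda>t. take (Suc i) (fst t) = take (Suc i) (fst s) \<and> snd t ! i = snd s ! i \<and> take i (snd t) = take i (snd s))
     = prob (joint a b b0 \<pi> n) (seqs n) (\<lambda>t. take (Suc i) (fst t) = take (Suc i) (fst s) \<and> take i (snd t) = take i (snd s))
       * Qch a b (fst s ! i) (prevb b0 (snd s) i) (snd s ! i)"
    unfolding P1[OF assms l2] P2[OF assms l2] using assms by (simp add: prevb_take)
qed

lemma cost_i: assumes "i \<le> n"
  shows "(\<Sum>s\<in>seqs n. joint a b b0 \<pi> n s * gamma (fst s ! i) (prevb b0 (snd s) i)) = cst a b b0 \<pi> i"
proof -
  have "(\<Sum>s\<in>seqs n. joint a b b0 \<pi> n s * gamma (fst s ! i) (prevb b0 (snd s) i))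
     = (\<Sum>s\<in>seqs n. joint a b b0 \<pi> n s * (\<lambda>u. gamma (fst u ! i) (prevb b0 (snd u) i)) (take (Suc i) (fst s), take (Suc i) (snd s)))"
    by (simp add: prevb_take)
  also have "\<dots> = (\<Sum>s\<in>seqsL (Suc i). Jp a b b0 \<pi> (Suc i) (fst s) (snd s) * gamma (fst s ! i) (prevb b0 (snd s) i))"
    using assms by (intro exp_marg) auto
  also have "\<dots> = cst a b b0 \<pi> i"
    unfolding step cst_def
  proof (rule sum.cong[OF refl])
    fix s assume "s \<in> seqsL i"
    hence l: "length (fst s) = i" "length (snd s) = i" unfolding seqsL_def by auto
    have "(\<Sum>x\<in>UNIV. \<Sum>y\<in>UNIV. \<pi> i (fst s) (snd s) x * Qch a b x (prevb b0 (snd s) i) y *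
            gamma (fst (fst s @ [x], snd s @ [y]) ! i) (prevb b0 (snd (fst s @ [x], snd s @ [y])) i))
        = (\<Sum>x\<in>UNIV. \<Sum>y\<in>UNIV. \<pi> i (fst s) (snd s) x * Qch a b x (prevb b0 (snd s) i) y * gamma x (prevb b0 (snd s) i))"
      using l by (intro sum.cong refl) (simp add: nth_append prevb_app)
    also have "\<dots> = (\<Sum>x\<in>UNIV. \<pi> i (fst s) (snd s) x * gamma x (prevb b0 (snd s) i))"
      by (simp add: Qsum sum_distrib_left[symmetric] mult_ac)
    also have "\<dots> = \<pi> i (fst s) (snd s) (prevb b0 (snd s) i)"
      unfolding UNIV_bool gamma_def by (cases "prevb b0 (snd s) i") auto
    finally show "Jp a b b0 \<pi> i (fst s) (snd s) *
        (\<Sum>x\<in>UNIV. \<Sum>y\<in>UNIV. \<pi> i (fst s) (snd s) x * Qch a b x (prevb b0 (snd s) i) y *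
            gamma (fst (fst s @ [x], snd s @ [y]) ! i) (prevb b0 (snd (fst s @ [x], snd s @ [y])) i)) =
        Jp a b b0 \<pi> i (fst s) (snd s) * \<pi> i (fst s) (snd s) (prevb b0 (snd s) i)" by simp
  qed
  finally show ?thesis .
qed

end


definition Rq :: "real \<Rightarrow> bool \<Rightarrow> bool \<Rightarrow> real" where
  "Rq q p y = (if y = p then q else 1 - q)"
definition K1 :: "real \<Rightarrow> real \<Rightarrow> real" where
  "K1 a q = a * log 2 (a / q) + (1 - a) * log 2 ((1 - a) / (1 - q))"
definition K2 :: "real \<Rightarrow> real \<Rightarrow> real" where
  "K2 b q = (1 - b) * log 2 ((1 - b) / q) + b * log 2 (b / (1 - q))"

lemma Kf: "(\<Sum>y\<in>UNIV. Qch a b x p y * log 2 (Qch a b x p y / Rq q p y)) = (if x = p then K1 a q else K2 b q)"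
  unfolding UNIV_bool Qch_def Rq_def K1_def K2_def by (cases x; cases p) (auto simp: add.commute)

lemma Kpi: assumes "\<pi>0 True + \<pi>0 False = 1"
  shows "(\<Sum>x\<in>UNIV. \<pi>0 x * (if x = p then K1 a q else K2 b q)) = K2 b q + (K1 a q - K2 b q) * \<pi>0 p"
proof -
  have e: "\<pi>0 (\<not> p) = 1 - \<pi>0 p" using assms by (cases p) auto
  have "(\<Sum>x\<in>UNIV. \<pi>0 x * (if x = p then K1 a q else K2 b q)) = \<pi>0 p * K1 a q + \<pi>0 (\<not> p) * K2 b q"
    unfolding UNIV_bool by (cases p) auto
  thus ?thesis unfolding e by (simp add: algebra_simps)
qed

lemma Rq_sum: "0 \<le> q \<Longrightarrow> q \<le> 1 \<Longrightarrow> (\<Sum>y\<in>Y. Rq q p y) \<le> 1"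
proof -
  assume q: "0 \<le> q" "q \<le> 1"
  have "(\<Sum>y\<in>Y. Rq q p y) \<le> (\<Sum>y\<in>UNIV. Rq q p y)"
    by (rule sum_mono2) (use q in \<open>auto simp: Rq_def\<close>)
  also have "\<dots> = 1" unfolding UNIV_bool Rq_def by (cases p) auto
  finally show ?thesis .
qed

lemma piTI_sum: "(\<Sum>x\<in>UNIV. piTI k b0 i as bs x * Qch a b x (prevb b0 bs i) y) = PTI a b k (prevb b0 bs i) y"
  unfolding UNIV_bool piTI_def Qch_def PTI_def lambar_def
  by (cases "prevb b0 bs i"; cases y) (auto simp: algebra_simps)

context
  fixes a b :: real and b0 :: bool and \<pi> :: policy and n :: nat
  assumes v: "valid_policy \<pi>" and ab: "0 \<le> a" "a \<le> 1" "0 \<le> b" "b \<le> 1"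
begin

lemma joint_nn: "0 \<le> joint a b b0 \<pi> n s"
  unfolding joint_Jp by (rule Jp_nonneg[OF v ab])

lemma joint_sum1: "sum (joint a b b0 \<pi> n) (seqs n) = 1"
  unfolding seqs_L joint_Jp using Jp_sum1[OF v] by simp

lemma cst_nn: "0 \<le> cst a b b0 \<pi> i"
  unfolding cst_def using v Jp_nonneg[OF v ab]
  by (intro sum_nonneg mult_nonneg_nonneg) (auto simp: valid_policy_def)

lemma logterm: assumes "i \<le> n"
  shows "(\<Sum>s\<in>seqs n. joint a b b0 \<pi> n s * log 2 (Qch a b (fst s ! i) (prevb b0 (snd s) i) (snd s ! i)
           / Rq q (prevb b0 (take i (snd s)) i) (snd s ! i)))
       = K2 b q + (K1 a q - K2 b q) * cst a b b0 \<pi> i"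
proof -
  define G where "G u = log 2 (Qch a b (fst u ! i) (prevb b0 (snd u) i) (snd u ! i) / Rq q (prevb b0 (snd u) i) (snd u ! i))" for u
  have "(\<Sum>s\<in>seqs n. joint a b b0 \<pi> n s * log 2 (Qch a b (fst s ! i) (prevb b0 (snd s) i) (snd s ! i)
           / Rq q (prevb b0 (take i (snd s)) i) (snd s ! i)))
     = (\<Sum>s\<in>seqs n. joint a b b0 \<pi> n s * G (take (Suc i) (fst s), take (Suc i) (snd s)))"
    unfolding G_def by (simp add: prevb_take)
  also have "\<dots> = (\<Sum>s\<in>seqsL (Suc i). Jp a b b0 \<pi> (Suc i) (fst s) (snd s) * G s)"
    using assms by (intro exp_marg[OF v]) auto
  also have "\<dots> = (\<Sum>s\<in>seqsL i. Jp a b b0 \<pi> i (fst s) (snd s) *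
       (K2 b q + (K1 a q - K2 b q) * \<pi> i (fst s) (snd s) (prevb b0 (snd s) i)))"
    unfolding step
  proof (rule sum.cong[OF refl])
    fix s assume "s \<in> seqsL i"
    hence l: "length (fst s) = i" "length (snd s) = i" unfolding seqsL_def by auto
    define p where "p = prevb b0 (snd s) i"
    have "(\<Sum>x\<in>UNIV. \<Sum>y\<in>UNIV. \<pi> i (fst s) (snd s) x * Qch a b x p y * G (fst s @ [x], snd s @ [y]))
       = (\<Sum>x\<in>UNIV. \<pi> i (fst s) (snd s) x * (\<Sum>y\<in>UNIV. Qch a b x p y * log 2 (Qch a b x p y / Rq q p y)))"
      unfolding sum_distrib_left G_def p_def using l
      by (intro sum.cong refl) (simp add: nth_append prevb_app mult.assoc)
    also have "\<dots> = K2 b q + (K1 a q - K2 b q) * \<pi> i (fst s) (snd s) p"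
      unfolding Kf using v unfolding valid_policy_def by (intro Kpi) auto
    finally show "Jp a b b0 \<pi> i (fst s) (snd s) *
         (\<Sum>x\<in>UNIV. \<Sum>y\<in>UNIV. \<pi> i (fst s) (snd s) x * Qch a b x (prevb b0 (snd s) i) y * G (fst s @ [x], snd s @ [y])) =
         Jp a b b0 \<pi> i (fst s) (snd s) * (K2 b q + (K1 a q - K2 b q) * \<pi> i (fst s) (snd s) (prevb b0 (snd s) i))"
      unfolding p_def by simp
  qed
  also have "\<dots> = (\<Sum>s\<in>seqsL i. K2 b q * Jp a b b0 \<pi> i (fst s) (snd s) +
       (K1 a q - K2 b q) * (Jp a b b0 \<pi> i (fst s) (snd s) * \<pi> i (fst s) (snd s) (prevb b0 (snd s) i)))"
    by (rule sum.cong) (auto simp: algebra_simps)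
  also have "\<dots> = K2 b q * (\<Sum>s\<in>seqsL i. Jp a b b0 \<pi> i (fst s) (snd s)) + (K1 a q - K2 b q) * cst a b b0 \<pi> i"
    unfolding cst_def by (simp only: sum.distrib sum_distrib_left)
  also have "\<dots> = K2 b q + (K1 a q - K2 b q) * cst a b b0 \<pi> i" using Jp_sum1[OF v] by simp
  finally show ?thesis .
qed

lemma DI_bound:
  assumes q: "0 \<le> q" "q \<le> 1"
    and rpos: "\<forall>i\<le>n. \<forall>s\<in>seqs n. 0 < joint a b b0 \<pi> n s \<longrightarrow> 0 < Qch a b (fst s ! i) (prevb b0 (snd s) i) (snd s ! i)
          \<longrightarrow> 0 < Rq q (prevb b0 (snd s) i) (snd s ! i)"
  shows "DI a b b0 \<pi> n \<le> (\<Sum>i\<le>n. K2 b q + (K1 a q - K2 b q) * cst a b b0 \<pi> i)"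
  unfolding DI_def
proof (rule sum_mono)
  fix i assume "i \<in> {..n}"
  hence i: "i \<le> n" by simp
  have "cmi (joint a b b0 \<pi> n) (seqs n) (\<lambda>s. take (Suc i) (fst s)) (\<lambda>s. snd s ! i) (\<lambda>s. take i (snd s))
     \<le> (\<Sum>s\<in>seqs n. joint a b b0 \<pi> n s * log 2 (Qch a b (fst s ! i) (prevb b0 (snd s) i) (snd s ! i)
           / Rq q (prevb b0 (take i (snd s)) i) (snd s ! i)))"
  proof (rule cmi_bound[where W="\<lambda>s. Qch a b (fst s ! i) (prevb b0 (snd s) i) (snd s ! i)"
        and r="\<lambda>zb y. Rq q (prevb b0 zb i) y"])
    show "finite (seqs n)" unfolding seqs_L by (rule finite_seqsL)
    show "\<forall>s\<in>seqs n. 0 \<le> joint a b b0 \<pi> n s" using joint_nn by simp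
    show "sum (joint a b b0 \<pi> n) (seqs n) = 1" by (rule joint_sum1)
    show "\<forall>z y. 0 \<le> Rq q (prevb b0 z i) y" using q by (auto simp: Rq_def)
    show "\<forall>z. (\<Sum>y\<in>(\<lambda>s. snd s ! i) ` seqs n. Rq q (prevb b0 z i) y) \<le> 1" using Rq_sum q by simp
    show "\<forall>s\<in>seqs n. 0 < joint a b b0 \<pi> n s \<longrightarrow> 0 < Qch a b (fst s ! i) (prevb b0 (snd s) i) (snd s ! i)
          \<longrightarrow> 0 < Rq q (prevb b0 (take i (snd s)) i) (snd s ! i)"
      using rpos i by (simp add: prevb_take)
  qed (rule W_cond[OF v i])
  also have "\<dots> = K2 b q + (K1 a q - K2 b q) * cst a b b0 \<pi> i" by (rule logterm[OF i])
  finally show "cmi (joint a b b0 \<pi> n) (seqs n) (\<lambda>s. take (Suc i) (fst s)) (\<lambda>s. snd s ! i) (\<lambda>s. take i (snd s))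
     \<le> K2 b q + (K1 a q - K2 b q) * cst a b b0 \<pi> i" .
qed

lemma avg_cost_cst: "avg_cost a b b0 \<pi> n = (1 / real (Suc n)) * (\<Sum>i\<le>n. cst a b b0 \<pi> i)"
  unfolding avg_cost_def using cost_i[OF v] by simp

end

lemma cst_piTI: assumes "valid_policy (piTI k b0)" shows "cst a b b0 (piTI k b0) i = k"
proof -
  have "cst a b b0 (piTI k b0) i = (\<Sum>s\<in>seqsL i. Jp a b b0 (piTI k b0) i (fst s) (snd s)) * k"
    unfolding cst_def sum_distrib_right by (rule sum.cong) (auto simp: piTI_def)
  thus ?thesis using Jp_sum1[OF assms, of a b b0 i] by simp
qed

context
  fixes a b :: real and b0 :: bool and k :: real and n :: nat
  assumes v: "valid_policy (piTI k b0)" and ab: "0 \<le> a" "a \<le> 1" "0 \<le> b" "b \<le> 1"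
begin

lemma Bq_piTI: assumes "length zb = i"
  shows "Bq a b b0 (piTI k b0) (Suc i) (zb @ [y]) = PTI a b k (prevb b0 zb i) y * Bq a b b0 (piTI k b0) i zb"
proof -
  have "Bq a b b0 (piTI k b0) (Suc i) (zb @ [y]) = (\<Sum>s\<in>seqsL i. Jp a b b0 (piTI k b0) i (fst s) (snd s) *
     (if snd s = zb then PTI a b k (prevb b0 zb i) y else 0))"
    unfolding B_step[OF v assms]
  proof (rule sum.cong[OF refl])
    fix s assume "s \<in> seqsL i"
    show "Jp a b b0 (piTI k b0) i (fst s) (snd s) *
         (if snd s = zb then \<Sum>x\<in>UNIV. piTI k b0 i (fst s) (snd s) x * Qch a b x (prevb b0 zb i) y else 0) =
         Jp a b b0 (piTI k b0) i (fst s) (snd s) * (if snd s = zb then PTI a b k (prevb b0 zb i) y else 0)"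
      using piTI_sum[of k b0 i "fst s" zb a b y] by auto
  qed
  also have "\<dots> = PTI a b k (prevb b0 zb i) y * Bq a b b0 (piTI k b0) i zb"
    unfolding Bq_def by (simp add: sum_distrib_left mult_ac if_distrib cong: if_cong)
  finally show ?thesis .
qed

lemma R_cond: assumes i: "i \<le> n"
  shows "\<forall>s\<in>seqs n. prob (joint a b b0 (piTI k b0) n) (seqs n) (\<lambda>t. snd t ! i = snd s ! i \<and> take i (snd t) = take i (snd s))
     = prob (joint a b b0 (piTI k b0) n) (seqs n) (\<lambda>t. take i (snd t) = take i (snd s))
       * Rq (lambar a b k) (prevb b0 (take i (snd s)) i) (snd s ! i)"
proof
  fix s assume "s \<in> seqs n"
  hence l: "length (snd s) = Suc n" unfolding seqs_def by auto
  have "prob (joint a b b0 (piTI k b0) n) (seqs n) (\<lambda>t. snd t ! i = snd s ! i \<and> take i (snd t) = take i (snd s))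
     = prob (joint a b b0 (piTI k b0) n) (seqs n) (\<lambda>t. take (Suc i) (snd t) = take i (snd s) @ [snd s ! i])"
  proof (rule prob_cong)
    fix t assume "t \<in> seqs n"
    hence "i < length (snd t)" using i unfolding seqs_def by auto
    hence "take (Suc i) (snd t) = take i (snd t) @ [snd t ! i]" by (rule take_Suc_conv_app_nth)
    thus "(snd t ! i = snd s ! i \<and> take i (snd t) = take i (snd s)) =
          (take (Suc i) (snd t) = take i (snd s) @ [snd s ! i])" by auto
  qed
  also have "\<dots> = Bq a b b0 (piTI k b0) (Suc i) (take i (snd s) @ [snd s ! i])"
    using i by (intro P_out[OF v]) auto
  also have "\<dots> = PTI a b k (prevb b0 (take i (snd s)) i) (snd s ! i) * Bq a b b0 (piTI k b0) i (take i (snd s))"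
    using i l by (intro Bq_piTI) auto
  also have "\<dots> = PTI a b k (prevb b0 (take i (snd s)) i) (snd s ! i) *
      prob (joint a b b0 (piTI k b0) n) (seqs n) (\<lambda>t. take i (snd t) = take i (snd s))"
    using i by (subst P_out[OF v]) auto
  finally show "prob (joint a b b0 (piTI k b0) n) (seqs n) (\<lambda>t. snd t ! i = snd s ! i \<and> take i (snd t) = take i (snd s))
     = prob (joint a b b0 (piTI k b0) n) (seqs n) (\<lambda>t. take i (snd t) = take i (snd s))
       * Rq (lambar a b k) (prevb b0 (take i (snd s)) i) (snd s ! i)"
    unfolding PTI_def Rq_def by (simp add: mult.commute)
qed

lemma DI_piTI: "DI a b b0 (piTI k b0) n = (\<Sum>i\<le>n. K2 b (lambar a b k) + (K1 a (lambar a b k) - K2 b (lambar a b k)) * k)"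
  unfolding DI_def
proof (rule sum.cong[OF refl])
  fix i assume "i \<in> {..n}"
  hence i: "i \<le> n" by simp
  have "cmi (joint a b b0 (piTI k b0) n) (seqs n) (\<lambda>s. take (Suc i) (fst s)) (\<lambda>s. snd s ! i) (\<lambda>s. take i (snd s))
     = (\<Sum>s\<in>seqs n. joint a b b0 (piTI k b0) n s * log 2 (Qch a b (fst s ! i) (prevb b0 (snd s) i) (snd s ! i)
           / Rq (lambar a b k) (prevb b0 (take i (snd s)) i) (snd s ! i)))"
  proof (rule cmi_eq[where W="\<lambda>s. Qch a b (fst s ! i) (prevb b0 (snd s) i) (snd s ! i)"
        and r="\<lambda>zb y. Rq (lambar a b k) (prevb b0 zb i) y"])
    show "finite (seqs n)" unfolding seqs_L by (rule finite_seqsL)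
    show "\<forall>s\<in>seqs n. 0 \<le> joint a b b0 (piTI k b0) n s" using joint_nn[OF v ab] by simp
  qed (rule W_cond[OF v i], rule R_cond[OF i])
  also have "\<dots> = K2 b (lambar a b k) + (K1 a (lambar a b k) - K2 b (lambar a b k)) * cst a b b0 (piTI k b0) i"
    by (rule logterm[OF v ab i])
  finally show "cmi (joint a b b0 (piTI k b0) n) (seqs n) (\<lambda>s. take (Suc i) (fst s)) (\<lambda>s. snd s ! i) (\<lambda>s. take i (snd s))
     = K2 b (lambar a b k) + (K1 a (lambar a b k) - K2 b (lambar a b k)) * k" using cst_piTI[OF v] by simp
qed

lemma avg_piTI: "avg_cost a b b0 (piTI k b0) n = k"
  unfolding avg_cost_cst[OF v ab] cst_piTI[OF v] by simp

end


lemma UNIV_bb: "(UNIV :: (bool \<times> bool) set) = {(True,True),(True,False),(False,True),(False,False)}"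
  by auto

lemma sum_pair: "(\<Sum>s\<in>(UNIV :: (bool \<times> bool) set). f s) = (\<Sum>x\<in>UNIV. \<Sum>y\<in>UNIV. f (x, y))"
  unfolding UNIV_bb UNIV_bool by (simp add: ac_simps)

definition P1 :: "real \<Rightarrow> real \<Rightarrow> bool \<Rightarrow> (bool \<Rightarrow> real) \<Rightarrow> bool \<times> bool \<Rightarrow> real" where
  "P1 a b b0 p s = p (fst s) * Qch a b (fst s) b0 (snd s)"

lemma mi1_P1: "mi1 a b b0 p = cmi (P1 a b b0 p) UNIV fst snd (\<lambda>_. ())"
  unfolding mi1_def P1_def ..

context
  fixes a b :: real and b0 :: bool and p :: "bool \<Rightarrow> real"
  assumes vd: "valid_dist p" and ab: "0 \<le> a" "a \<le> 1" "0 \<le> b" "b \<le> 1"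
begin

lemma P1_nn: "0 \<le> P1 a b b0 p s"
  unfolding P1_def using vd ab Qnn unfolding valid_dist_def by (auto intro: mult_nonneg_nonneg)

lemma P1_sum: "sum (P1 a b b0 p) UNIV = 1"
  using vd unfolding sum_pair P1_def UNIV_bool valid_dist_def Qch_def by (cases b0) (auto simp: algebra_simps)

lemma W1: "\<forall>s\<in>UNIV. prob (P1 a b b0 p) UNIV (\<lambda>t. fst t = fst s \<and> snd t = snd s \<and> () = ())
     = prob (P1 a b b0 p) UNIV (\<lambda>t. fst t = fst s \<and> () = ()) * Qch a b (fst s) b0 (snd s)"
proof
  fix s :: "bool \<times> bool"
  show "prob (P1 a b b0 p) UNIV (\<lambda>t. fst t = fst s \<and> snd t = snd s \<and> () = ())
     = prob (P1 a b b0 p) UNIV (\<lambda>t. fst t = fst s \<and> () = ()) * Qch a b (fst s) b0 (snd s)"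
    unfolding prob_ind[OF finite] sum_pair UNIV_bool P1_def Qch_def
    by (cases s; cases b0) (auto simp: algebra_simps)
qed

lemma logsum1: "(\<Sum>s\<in>UNIV. P1 a b b0 p s * log 2 (Qch a b (fst s) b0 (snd s) / Rq q b0 (snd s)))
    = K2 b q + (K1 a q - K2 b q) * p b0"
proof -
  have "(\<Sum>s\<in>UNIV. P1 a b b0 p s * log 2 (Qch a b (fst s) b0 (snd s) / Rq q b0 (snd s)))
      = (\<Sum>x\<in>UNIV. p x * (\<Sum>y\<in>UNIV. Qch a b x b0 y * log 2 (Qch a b x b0 y / Rq q b0 y)))"
    unfolding sum_pair P1_def by (simp add: sum_distrib_left mult.assoc)
  also have "\<dots> = K2 b q + (K1 a q - K2 b q) * p b0"
    unfolding Kf using vd unfolding valid_dist_def by (intro Kpi) auto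
  finally show ?thesis .
qed

lemma mi1_bound:
  assumes q: "0 \<le> q" "q \<le> 1"
    and rpos: "\<forall>s. 0 < P1 a b b0 p s \<longrightarrow> 0 < Qch a b (fst s) b0 (snd s) \<longrightarrow> 0 < Rq q b0 (snd s)"
  shows "mi1 a b b0 p \<le> K2 b q + (K1 a q - K2 b q) * p b0"
proof -
  have "mi1 a b b0 p \<le> (\<Sum>s\<in>UNIV. P1 a b b0 p s * log 2 (Qch a b (fst s) b0 (snd s) / Rq q b0 (snd s)))"
    unfolding mi1_P1
  proof (rule cmi_bound[where W="\<lambda>s. Qch a b (fst s) b0 (snd s)" and r="\<lambda>z y. Rq q b0 y"])
    show "\<forall>s\<in>UNIV. 0 \<le> P1 a b b0 p s" using P1_nn by simp
    show "\<forall>z y. 0 \<le> Rq q b0 y" using q by (auto simp: Rq_def)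
    show "\<forall>z. (\<Sum>y\<in>snd ` UNIV. Rq q b0 y) \<le> 1" using Rq_sum q by simp
    show "\<forall>s\<in>UNIV. 0 < P1 a b b0 p s \<longrightarrow> 0 < Qch a b (fst s) b0 (snd s) \<longrightarrow> 0 < Rq q b0 (snd s)"
      using rpos by simp
  qed (simp, rule P1_sum, rule W1)
  thus ?thesis unfolding logsum1 .
qed

end

lemma mi1_eq:
  assumes ab: "0 \<le> a" "a \<le> 1" "0 \<le> b" "b \<le> 1" and k: "0 \<le> k" "k \<le> 1"
  shows "mi1 a b b0 (\<lambda>x. if x = b0 then k else 1 - k)
     = K2 b (lambar a b k) + (K1 a (lambar a b k) - K2 b (lambar a b k)) * k"
proof -
  define p :: "bool \<Rightarrow> real" where "p = (\<lambda>x. if x = b0 then k else 1 - k)"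
  have vd: "valid_dist p" unfolding p_def valid_dist_def using k by (cases b0) auto
  have R: "\<forall>s\<in>UNIV. prob (P1 a b b0 p) UNIV (\<lambda>t. snd t = snd s \<and> () = ()) =
        prob (P1 a b b0 p) UNIV (\<lambda>t. () = ()) * Rq (lambar a b k) b0 (snd s)"
    unfolding prob_ind[OF finite] sum_pair UNIV_bool P1_def Qch_def p_def Rq_def lambar_def
    apply (intro ballI)
    subgoal for s by (cases s; cases b0) (auto simp: algebra_simps)
    done
  have nn: "\<forall>s\<in>UNIV. 0 \<le> P1 a b b0 p s" using P1_nn[OF vd ab] by simp
  have "mi1 a b b0 p = (\<Sum>s\<in>UNIV. P1 a b b0 p s * log 2 (Qch a b (fst s) b0 (snd s) / Rq (lambar a b k) b0 (snd s)))"
    unfolding mi1_P1 by (rule cmi_eq[OF finite nn W1[OF vd ab] R])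
  also have "\<dots> = K2 b (lambar a b k) + (K1 a (lambar a b k) - K2 b (lambar a b k)) * k"
    using logsum1[OF vd ab, where q="lambar a b k"] unfolding p_def by simp
  finally show ?thesis unfolding p_def .
qed



lemma xlog: "0 \<le> x \<Longrightarrow> 0 < q \<Longrightarrow> x * log 2 (x / q) = x * log 2 x - x * log 2 q"
  by (cases "x = 0") (auto simp: log_divide right_diff_distrib)

lemma K1_A1: "0 \<le> a \<Longrightarrow> a \<le> 1 \<Longrightarrow> 0 < q \<Longrightarrow> q < 1 \<Longrightarrow> K1 a q = A1 a b q"
  unfolding K1_def A1_def binH_eq by (simp add: xlog)

lemma K2_A2: "0 \<le> b \<Longrightarrow> b \<le> 1 \<Longrightarrow> 0 < q \<Longrightarrow> q < 1 \<Longrightarrow> K2 b q = A2 a b q"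
  unfolding K2_def A2_def binH_eq by (simp add: xlog)

lemma xlogxx: "x * log 2 (x / x) = 0" by (cases "x = 0") auto

lemma K2_deg: "K2 b (1 - b) = 0"
  unfolding K2_def using xlogxx[of "1-b"] xlogxx[of b] by simp

lemma Phi_0: "Phi a b 0 = 0"
  unfolding Phi_def lambar_def using binH_sym[of b] by simp

context
  fixes a b :: real
  assumes ab: "0 \<le> a" "a \<le> 1" "0 \<le> b" "b \<le> 1" "a + b \<noteq> 1"
begin

lemma lambar_range: assumes "0 \<le> k" "k \<le> 1" shows "0 \<le> lambar a b k \<and> lambar a b k \<le> 1"
proof -
  have "a * k \<le> k" "(1 - k) * (1 - b) \<le> 1 - k" using ab assms by (auto intro: mult_left_le_one_le mult_left_le)
  moreover have "0 \<le> a * k" "0 \<le> (1 - k) * (1 - b)" using ab assms by auto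
  ultimately show ?thesis unfolding lambar_def by linarith
qed

lemma deg: assumes "0 \<le> kap" "\<not> (0 < lambar a b (min kap (nu a b)) \<and> lambar a b (min kap (nu a b)) < 1)"
  shows "kap = 0"
proof -
  have nr: "0 \<le> nu a b \<and> nu a b \<le> 1" by (rule nu_range[OF ab])
  define k0 where "k0 = min kap (nu a b)"
  have "\<not> 0 < k0"
  proof
    assume "0 < k0"
    hence "0 < lambar a b k0 \<and> lambar a b k0 < 1" using q_range[OF ab, of k0] k0_def by simp
    thus False using assms(2) k0_def by simp
  qed
  hence k0: "k0 = 0" using k0_def assms nr by linarith
  show ?thesis
  proof (rule ccontr)
    assume "kap \<noteq> 0"
    hence "k0 = nu a b" using k0 k0_def assms(1) by linarith
    hence "lambar a b k0 = lam a b" using lambar_nu[OF ab(5)] by simp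
    thus False using assms(2) k0_def lam_pos[of a b] by simp
  qed
qed

lemma C2: assumes kap: "0 \<le> kap" and x: "0 \<le> x" "x \<le> kap"
  shows "K2 b (lambar a b (min kap (nu a b))) + (K1 a (lambar a b (min kap (nu a b))) - K2 b (lambar a b (min kap (nu a b)))) * x
      \<le> Phi a b (min kap (nu a b))"
proof -
  have nr: "0 \<le> nu a b \<and> nu a b \<le> 1" by (rule nu_range[OF ab])
  define k0 where "k0 = min kap (nu a b)"
  define q where "q = lambar a b k0"
  have "K2 b q + (K1 a q - K2 b q) * x \<le> Phi a b k0"
  proof (cases "0 < q \<and> q < 1")
    case True
    hence KA: "K1 a q = A1 a b q" "K2 b q = A2 a b q" using K1_A1 K2_A2 ab by auto
    have tan: "A2 a b q + (A1 a b q - A2 a b q) * k0 = Phi a b k0" using tangent q_def by simp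
    show ?thesis unfolding KA
    proof (cases "kap \<le> nu a b")
      case True
      hence "k0 = kap" using k0_def by simp
      moreover have "0 \<le> A1 a b q - A2 a b q"
        using slope_nonneg[OF ab, of k0] \<open>0 < q \<and> q < 1\<close> q_def k0_def kap nr by simp
      ultimately show "A2 a b q + (A1 a b q - A2 a b q) * x \<le> Phi a b k0"
        using tan x by (metis add_left_mono mult_left_mono)
    next
      case False
      hence "k0 = nu a b" using k0_def by simp
      hence "q = lam a b" using q_def lambar_nu[OF ab(5)] by simp
      hence "A1 a b q - A2 a b q = 0" using slope_zero[OF ab] by simp
      thus "A2 a b q + (A1 a b q - A2 a b q) * x \<le> Phi a b k0" using tan by simp
    qed
  next
    case False
    hence "kap = 0" using deg[OF kap] q_def k0_def by simp
    hence "x = 0" "k0 = 0" using x k0_def nr by auto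
    hence "q = 1 - b" using q_def lambar_def by simp
    thus ?thesis using \<open>x = 0\<close> \<open>k0 = 0\<close> K2_deg Phi_0 by simp
  qed
  thus ?thesis using k0_def q_def by simp
qed

lemma C3: assumes kap: "0 \<le> kap"
  shows "K2 b (lambar a b (min kap (nu a b))) + (K1 a (lambar a b (min kap (nu a b))) - K2 b (lambar a b (min kap (nu a b)))) * min kap (nu a b)
      = Phi a b (min kap (nu a b))"
proof -
  have nr: "0 \<le> nu a b \<and> nu a b \<le> 1" by (rule nu_range[OF ab])
  define k0 where "k0 = min kap (nu a b)"
  define q where "q = lambar a b k0"
  have "K2 b q + (K1 a q - K2 b q) * k0 = Phi a b k0"
  proof (cases "0 < q \<and> q < 1")
    case True
    hence KA: "K1 a q = A1 a b q" "K2 b q = A2 a b q" using K1_A1 K2_A2 ab by auto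
    show ?thesis unfolding KA using tangent q_def by simp
  next
    case False
    hence "kap = 0" using deg[OF kap] q_def k0_def by simp
    hence "k0 = 0" using k0_def nr by auto
    hence "q = 1 - b" using q_def lambar_def by simp
    thus ?thesis using \<open>k0 = 0\<close> K2_deg Phi_0 by simp
  qed
  thus ?thesis using k0_def q_def by simp
qed

lemma Rq_deg: "a0 \<noteq> p \<Longrightarrow> Rq (1 - b) p y = Qch a b a0 p y"
  unfolding Rq_def Qch_def by auto

end


lemma valid_piTI: "0 \<le> k \<Longrightarrow> k \<le> 1 \<Longrightarrow> valid_policy (piTI k b0)"
  unfolding valid_policy_def piTI_def by auto

context
  fixes a b :: real
  assumes ab: "0 \<le> a" "a \<le> 1" "0 \<le> b" "b \<le> 1" "a + b \<noteq> 1"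
begin

lemma DI_upper:
  assumes kap: "0 \<le> kap" and v: "valid_policy \<pi>" and c: "avg_cost a b b0 \<pi> n \<le> kap"
  shows "DI a b b0 \<pi> n \<le> real (Suc n) * Phi a b (min kap (nu a b))"
proof -
  have nr: "0 \<le> nu a b \<and> nu a b \<le> 1" by (rule nu_range[OF ab])
  define k0 where "k0 = min kap (nu a b)"
  define q where "q = lambar a b k0"
  have k0r: "0 \<le> k0" "k0 \<le> 1" using k0_def kap nr by auto
  have qr: "0 \<le> q" "q \<le> 1" using lambar_range[OF ab k0r] q_def by auto
  have cnn: "0 \<le> cst a b b0 \<pi> i" for i by (rule cst_nn[OF v ab(1-4)])
  define x where "x = avg_cost a b b0 \<pi> n"
  have xs: "x = (1 / real (Suc n)) * (\<Sum>i\<le>n. cst a b b0 \<pi> i)"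
    using avg_cost_cst[OF v ab(1-4)] x_def by simp
  have x0: "0 \<le> x" unfolding xs using cnn by (simp add: sum_nonneg)
  have rpos: "\<forall>i\<le>n. \<forall>s\<in>seqs n. 0 < joint a b b0 \<pi> n s \<longrightarrow> 0 < Qch a b (fst s ! i) (prevb b0 (snd s) i) (snd s ! i)
          \<longrightarrow> 0 < Rq q (prevb b0 (snd s) i) (snd s ! i)"
  proof (cases "0 < q \<and> q < 1")
    case True thus ?thesis by (auto simp: Rq_def)
  next
    case False
    hence k: "kap = 0" using deg[OF ab kap] q_def k0_def by simp
    hence "k0 = 0" using k0_def nr by auto
    hence q1: "q = 1 - b" using q_def lambar_def by simp
    have e: "(\<Sum>i\<le>n. cst a b b0 \<pi> i) = x * real (Suc n)" using xs by simp
    have "x \<le> 0" using c k x_def by simp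
    hence "(\<Sum>i\<le>n. cst a b b0 \<pi> i) \<le> 0" unfolding e by (simp add: mult_nonpos_nonneg)
    moreover have "0 \<le> (\<Sum>i\<le>n. cst a b b0 \<pi> i)" by (rule sum_nonneg) (use cnn in auto)
    ultimately have "(\<Sum>i\<le>n. cst a b b0 \<pi> i) = 0" by linarith
    hence cz: "\<forall>i\<le>n. cst a b b0 \<pi> i = 0" using sum_nonneg_eq_0_iff[of "{..n}" "cst a b b0 \<pi>"] cnn by auto
    show ?thesis
    proof (intro allI impI ballI)
      fix i s assume i: "i \<le> n" and s: "s \<in> seqs n" and J: "0 < joint a b b0 \<pi> n s"
        and Q: "0 < Qch a b (fst s ! i) (prevb b0 (snd s) i) (snd s ! i)"
      have "(\<Sum>s\<in>seqs n. joint a b b0 \<pi> n s * gamma (fst s ! i) (prevb b0 (snd s) i)) = 0"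
        using cost_i[OF v i] cz i by simp
      moreover have nn: "\<And>s. s \<in> seqs n \<Longrightarrow> 0 \<le> joint a b b0 \<pi> n s * gamma (fst s ! i) (prevb b0 (snd s) i)"
        using joint_nn[OF v ab(1-4)] by (auto simp: gamma_def)
      moreover have "(\<Sum>s\<in>seqs n. joint a b b0 \<pi> n s * gamma (fst s ! i) (prevb b0 (snd s) i)) = 0 \<longleftrightarrow>
          (\<forall>s\<in>seqs n. joint a b b0 \<pi> n s * gamma (fst s ! i) (prevb b0 (snd s) i) = 0)"
        by (rule sum_nonneg_eq_0_iff[OF finite_seqsL[of "Suc n", folded seqs_L] nn])
      ultimately have "\<forall>s\<in>seqs n. joint a b b0 \<pi> n s * gamma (fst s ! i) (prevb b0 (snd s) i) = 0"
        by blast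
      hence "joint a b b0 \<pi> n s * gamma (fst s ! i) (prevb b0 (snd s) i) = 0" using s by blast
      hence "fst s ! i \<noteq> prevb b0 (snd s) i" using J by (auto simp: gamma_def split: if_splits)
      thus "0 < Rq q (prevb b0 (snd s) i) (snd s ! i)"
        using Rq_deg[OF ab, of "fst s ! i" "prevb b0 (snd s) i" "snd s ! i"] Q q1 by simp
    qed
  qed
  have "DI a b b0 \<pi> n \<le> (\<Sum>i\<le>n. K2 b q + (K1 a q - K2 b q) * cst a b b0 \<pi> i)"
    by (rule DI_bound[OF v ab(1-4) qr rpos])
  also have "\<dots> = real (Suc n) * K2 b q + (K1 a q - K2 b q) * (\<Sum>i\<le>n. cst a b b0 \<pi> i)"
    by (simp add: sum.distrib sum_distrib_left)
  also have "\<dots> = real (Suc n) * (K2 b q + (K1 a q - K2 b q) * x)"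
  proof -
    have e: "(\<Sum>i\<le>n. cst a b b0 \<pi> i) = real (Suc n) * x" unfolding xs by simp
    show ?thesis unfolding e by (simp add: algebra_simps)
  qed
  also have "\<dots> \<le> real (Suc n) * Phi a b k0"
    using C2[OF ab kap x0] c x_def q_def k0_def by (intro mult_left_mono) auto
  finally show ?thesis unfolding k0_def .
qed

lemma DI_attain:
  assumes kap: "0 \<le> kap"
  shows "DI a b b0 (piTI (min kap (nu a b)) b0) n = real (Suc n) * Phi a b (min kap (nu a b))"
proof -
  have nr: "0 \<le> nu a b \<and> nu a b \<le> 1" by (rule nu_range[OF ab])
  define k0 where "k0 = min kap (nu a b)"
  have k0r: "0 \<le> k0" "k0 \<le> 1" using k0_def kap nr by auto
  have v: "valid_policy (piTI k0 b0)" by (rule valid_piTI[OF k0r])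
  have "DI a b b0 (piTI k0 b0) n = (\<Sum>i\<le>n. K2 b (lambar a b k0) + (K1 a (lambar a b k0) - K2 b (lambar a b k0)) * k0)"
    by (rule DI_piTI[OF v ab(1-4)])
  also have "\<dots> = real (Suc n) * Phi a b k0" using C3[OF ab kap] k0_def by simp
  finally show ?thesis unfolding k0_def .
qed

lemma Cfb_val:
  assumes kap: "0 \<le> kap"
  shows "Cfb a b n kap b0 = real (Suc n) * Phi a b (min kap (nu a b))"
  unfolding Cfb_def
proof (rule cSup_eq_maximum)
  have nr: "0 \<le> nu a b \<and> nu a b \<le> 1" by (rule nu_range[OF ab])
  have k0r: "0 \<le> min kap (nu a b)" "min kap (nu a b) \<le> 1" using kap nr by auto
  have v: "valid_policy (piTI (min kap (nu a b)) b0)" by (rule valid_piTI[OF k0r])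
  have "avg_cost a b b0 (piTI (min kap (nu a b)) b0) n \<le> kap" using avg_piTI[OF v ab(1-4)] by simp
  thus "real (Suc n) * Phi a b (min kap (nu a b)) \<in> {DI a b b0 \<pi> n |\<pi>. valid_policy \<pi> \<and> avg_cost a b b0 \<pi> n \<le> kap}"
    using v DI_attain[OF kap] by (auto intro!: exI[of _ "piTI (min kap (nu a b)) b0"])
next
  fix y assume "y \<in> {DI a b b0 \<pi> n |\<pi>. valid_policy \<pi> \<and> avg_cost a b b0 \<pi> n \<le> kap}"
  thus "y \<le> real (Suc n) * Phi a b (min kap (nu a b))" using DI_upper[OF kap] by auto
qed

lemma mi1_sup:
  assumes kap: "0 \<le> kap" "kap \<le> nu a b"
  shows "Sup {mi1 a b b0 q | q. valid_dist q \<and> cost1 b0 q \<le> kap} = Phi a b kap"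
    and "mi1 a b b0 (\<lambda>x. if x = b0 then kap else 1 - kap) = Phi a b kap"
    and "valid_dist (\<lambda>x. if x = b0 then kap else 1 - kap)"
    and "cost1 b0 (\<lambda>x. if x = b0 then kap else 1 - kap) \<le> kap"
proof -
  have nr: "0 \<le> nu a b \<and> nu a b \<le> 1" by (rule nu_range[OF ab])
  have mk: "min kap (nu a b) = kap" using kap by simp
  have k1: "kap \<le> 1" using kap nr by simp
  show vd: "valid_dist (\<lambda>x. if x = b0 then kap else 1 - kap)"
    unfolding valid_dist_def using kap k1 by (cases b0) auto
  show c1: "cost1 b0 (\<lambda>x. if x = b0 then kap else 1 - kap) \<le> kap"
    unfolding cost1_def UNIV_bool gamma_def by (cases b0) auto
  show me: "mi1 a b b0 (\<lambda>x. if x = b0 then kap else 1 - kap) = Phi a b kap"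
    unfolding mi1_eq[OF ab(1-4) kap(1) k1] using C3[OF ab kap(1)] mk by simp
  show "Sup {mi1 a b b0 q | q. valid_dist q \<and> cost1 b0 q \<le> kap} = Phi a b kap"
  proof (rule cSup_eq_maximum)
    show "Phi a b kap \<in> {mi1 a b b0 q | q. valid_dist q \<and> cost1 b0 q \<le> kap}"
      using vd c1 me by (auto intro!: exI[of _ "\<lambda>x. if x = b0 then kap else 1 - kap"])
  next
    fix y assume "y \<in> {mi1 a b b0 q | q. valid_dist q \<and> cost1 b0 q \<le> kap}"
    then obtain p where y: "y = mi1 a b b0 p" and p: "valid_dist p" "cost1 b0 p \<le> kap" by auto
    have cp: "cost1 b0 p = p b0" unfolding cost1_def UNIV_bool gamma_def by (cases b0) auto
    define q where "q = lambar a b kap"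
    have qr: "0 \<le> q" "q \<le> 1" using lambar_range[OF ab kap(1) k1] q_def by auto
    have rpos: "\<forall>s. 0 < P1 a b b0 p s \<longrightarrow> 0 < Qch a b (fst s) b0 (snd s) \<longrightarrow> 0 < Rq q b0 (snd s)"
    proof (cases "0 < q \<and> q < 1")
      case True thus ?thesis by (auto simp: Rq_def)
    next
      case False
      hence k: "kap = 0" using deg[OF ab kap(1)] q_def mk by simp
      hence q1: "q = 1 - b" using q_def lambar_def by simp
      have pb: "p b0 = 0" using p cp k unfolding valid_dist_def by (metis order_antisym)
      show ?thesis
      proof (intro allI impI)
        fix s assume P: "0 < P1 a b b0 p s" and Q: "0 < Qch a b (fst s) b0 (snd s)"
        have "fst s \<noteq> b0"
        proof
          assume "fst s = b0"
          thus False using P pb unfolding P1_def by simp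
        qed
        thus "0 < Rq q b0 (snd s)" using Rq_deg[OF ab] Q q1 by metis
      qed
    qed
    have "y \<le> K2 b q + (K1 a q - K2 b q) * p b0"
      unfolding y by (rule mi1_bound[OF p(1) ab(1-4) qr rpos])
    also have "\<dots> \<le> Phi a b kap"
      using C2[OF ab kap(1), of "p b0"] p cp mk q_def unfolding valid_dist_def by simp
    finally show "y \<le> Phi a b kap" .
  qed
qed

end


context
  fixes a b :: real
  assumes ab: "0 \<le> a" "a \<le> 1" "0 \<le> b" "b \<le> 1" "a + b \<noteq> 1"
begin

lemma H1: "0 \<le> k \<Longrightarrow> k \<le> nu a b \<Longrightarrow> valid_policy (piTI k b0)"
  using nu_range[OF ab] by (intro valid_piTI) auto

lemma H2: "0 \<le> k \<Longrightarrow> k \<le> nu a b \<Longrightarrow> avg_cost a b b0 (piTI k b0) n \<le> k"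
  using avg_piTI[OF H1 ab(1-4)] by simp

lemma H3: "0 \<le> k \<Longrightarrow> k \<le> nu a b \<Longrightarrow> DI a b b0 (piTI k b0) n = Cfb a b n k b0"
  using DI_attain[OF ab, of k b0 n] Cfb_val[OF ab, of k n b0] by simp

lemma H4: assumes k: "0 \<le> k" "k \<le> nu a b" and i: "i \<le> n" and l: "length bs = Suc i"
  and pos: "prob (joint a b b0 (piTI k b0) n) (seqs n) (\<lambda>s. take i (snd s) = take i bs) > 0"
  shows "prob (joint a b b0 (piTI k b0) n) (seqs n) (\<lambda>s. take (Suc i) (snd s) = bs)
       / prob (joint a b b0 (piTI k b0) n) (seqs n) (\<lambda>s. take i (snd s) = take i bs)
       = PTI a b k (prevb b0 bs i) (bs ! i)"
proof -
  have v: "valid_policy (piTI k b0)" by (rule H1[OF k])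
  have bs: "bs = take i bs @ [bs ! i]" using l by (metis lessI take_Suc_conv_app_nth take_all order_refl)
  have den: "prob (joint a b b0 (piTI k b0) n) (seqs n) (\<lambda>s. take i (snd s) = take i bs) = Bq a b b0 (piTI k b0) i (take i bs)"
    using i by (intro P_out[OF v]) auto
  have "prob (joint a b b0 (piTI k b0) n) (seqs n) (\<lambda>s. take (Suc i) (snd s) = bs) = Bq a b b0 (piTI k b0) (Suc i) bs"
    using i by (intro P_out[OF v]) auto
  also have "\<dots> = Bq a b b0 (piTI k b0) (Suc i) (take i bs @ [bs ! i])" using bs by simp
  also have "\<dots> = PTI a b k (prevb b0 (take i bs) i) (bs ! i) * Bq a b b0 (piTI k b0) i (take i bs)"
    using l by (intro Bq_piTI[OF v ab(1-4)]) auto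
  finally show ?thesis using pos den by (simp add: prevb_take)
qed

lemma H5: "0 \<le> k \<Longrightarrow> k \<le> nu a b \<Longrightarrow> (\<exists>p. valid_dist p \<and> cost1 b0 p \<le> k \<and>
            mi1 a b b0 p = Sup {mi1 a b b0 q | q. valid_dist q \<and> cost1 b0 q \<le> k})"
  using mi1_sup[OF ab, of k b0] by (intro exI[of _ "\<lambda>x. if x = b0 then k else 1 - k"]) simp

lemma H6: "0 \<le> k \<Longrightarrow> k \<le> nu a b \<Longrightarrow> Cfb a b n k b0
          = real (Suc n) * Sup {mi1 a b b0 q | q. valid_dist q \<and> cost1 b0 q \<le> k}"
  using mi1_sup(1)[OF ab, of k b0] Cfb_val[OF ab, of k n b0] by simp

lemma H7: assumes "0 \<le> k"
  shows "(\<lambda>n. Cfb a b n k b0 / real (Suc n)) \<longlonglongrightarrow>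
          (if k \<le> nu a b
           then binH (lambar a b k) - k * binH a - (1 - k) * binH b
           else binH (lam a b) - nu a b * binH a - (1 - nu a b) * binH b)"
proof -
  have e: "(\<lambda>n. Cfb a b n k b0 / real (Suc n)) = (\<lambda>n. Phi a b (min k (nu a b)))"
    using Cfb_val[OF ab assms] by (intro ext) (simp del: of_nat_Suc)
  have "Phi a b (min k (nu a b)) = (if k \<le> nu a b
           then binH (lambar a b k) - k * binH a - (1 - k) * binH b
           else binH (lam a b) - nu a b * binH a - (1 - nu a b) * binH b)"
    using Phi_nu[OF ab] unfolding Phi_def by auto
  thus ?thesis unfolding e by simp
qed

end

theorem mainTheorem10:
  fixes \<alpha> \<beta> :: real
  assumes "0 \<le> \<alpha>" "\<alpha> \<le> 1" "0 \<le> \<beta>" "\<beta> \<le> 1" "\<alpha> + \<beta> \<noteq> 1"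
  shows
    "(\<forall>\<kappa> n b0. 0 \<le> \<kappa> \<and> \<kappa> \<le> nu \<alpha> \<beta> \<longrightarrow>
        valid_policy (piTI \<kappa> b0)
      \<and> avg_cost \<alpha> \<beta> b0 (piTI \<kappa> b0) n \<le> \<kappa>
      \<and> DI \<alpha> \<beta> b0 (piTI \<kappa> b0) n = Cfb \<alpha> \<beta> n \<kappa> b0
      \<and> (\<forall>i\<le>n. \<forall>bs. length bs = Suc i \<longrightarrow>
            prob (joint \<alpha> \<beta> b0 (piTI \<kappa> b0) n) (seqs n) (\<lambda>s. take i (snd s) = take i bs) > 0 \<longrightarrow>
            prob (joint \<alpha> \<beta> b0 (piTI \<kappa> b0) n) (seqs n) (\<lambda>s. take (Suc i) (snd s) = bs)
            / prob (joint \<alpha> \<beta> b0 (piTI \<kappa> b0) n) (seqs n) (\<lambda>s. take i (snd s) = take i bs)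
            = PTI \<alpha> \<beta> \<kappa> (prevb b0 bs i) (bs ! i))
      \<and> (\<exists>p. valid_dist p \<and> cost1 b0 p \<le> \<kappa> \<and>
            mi1 \<alpha> \<beta> b0 p = Sup {mi1 \<alpha> \<beta> b0 q | q. valid_dist q \<and> cost1 b0 q \<le> \<kappa>})
      \<and> Cfb \<alpha> \<beta> n \<kappa> b0
          = real (Suc n) * Sup {mi1 \<alpha> \<beta> b0 q | q. valid_dist q \<and> cost1 b0 q \<le> \<kappa>})
   \<and> (\<forall>\<kappa> b0. 0 \<le> \<kappa> \<longrightarrow>
        (\<lambda>n. Cfb \<alpha> \<beta> n \<kappa> b0 / real (Suc n)) \<longlonglongrightarrow>
          (if \<kappa> \<le> nu \<alpha> \<beta>
           then binH (lambar \<alpha> \<beta> \<kappa>) - \<kappa> * binH \<alpha> - (1 - \<kappa>) * binH \<beta>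
           else binH (lam \<alpha> \<beta>) - nu \<alpha> \<beta> * binH \<alpha> - (1 - nu \<alpha> \<beta>) * binH \<beta>))"
proof (intro conjI allI impI)
  fix k :: real and n :: nat and b0 :: bool
  assume k: "0 \<le> k \<and> k \<le> nu \<alpha> \<beta>"
  show "valid_policy (piTI k b0)" using H1[OF assms] k by blast
  show "avg_cost \<alpha> \<beta> b0 (piTI k b0) n \<le> k" using H2[OF assms] k by blast
  show "DI \<alpha> \<beta> b0 (piTI k b0) n = Cfb \<alpha> \<beta> n k b0" using H3[OF assms] k by blast
  show "\<exists>p. valid_dist p \<and> cost1 b0 p \<le> k \<and>
            mi1 \<alpha> \<beta> b0 p = Sup {mi1 \<alpha> \<beta> b0 q | q. valid_dist q \<and> cost1 b0 q \<le> k}"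
    using H5[OF assms] k by blast
  show "Cfb \<alpha> \<beta> n k b0 = real (Suc n) * Sup {mi1 \<alpha> \<beta> b0 q | q. valid_dist q \<and> cost1 b0 q \<le> k}"
    using H6[OF assms] k by blast
  fix i bs assume "i \<le> n" "length bs = Suc i"
    "prob (joint \<alpha> \<beta> b0 (piTI k b0) n) (seqs n) (\<lambda>s. take i (snd s) = take i bs) > 0"
  thus "prob (joint \<alpha> \<beta> b0 (piTI k b0) n) (seqs n) (\<lambda>s. take (Suc i) (snd s) = bs)
            / prob (joint \<alpha> \<beta> b0 (piTI k b0) n) (seqs n) (\<lambda>s. take i (snd s) = take i bs)
            = PTI \<alpha> \<beta> k (prevb b0 bs i) (bs ! i)" using H4[OF assms] k by blast
next
  fix k :: real and b0 :: bool
  assume "0 \<le> k"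
  thus "(\<lambda>n. Cfb \<alpha> \<beta> n k b0 / real (Suc n)) \<longlonglongrightarrow>
          (if k \<le> nu \<alpha> \<beta>
           then binH (lambar \<alpha> \<beta> k) - k * binH \<alpha> - (1 - k) * binH \<beta>
           else binH (lam \<alpha> \<beta>) - nu \<alpha> \<beta> * binH \<alpha> - (1 - nu \<alpha> \<beta>) * binH \<beta>)"
    by (rule H7[OF assms])
qed


end
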